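(* Let $d\ge2$, $n\ge1$. The magic entropy of $n$-qudit unitaries satisfies: (1) $M[U]\ge0$, with $M[U]=0$ if and only if $U$ is a Clifford unitary; (2) $M[VU]=M[U]$ for every unitary $U$ and every Clifford unitary $V$; (3) $M[U_1\otimes U_2]=\max\{M[U_1],M[U_2]\}$ for all unitaries $U_1,U_2$ on disjoint sets of qudits.
   Context: Let $V=\mathbb{Z}_d\times\mathbb{Z}_d$; for $a=(s,t)\in V$, $P_a=X^sZ^t$ with $X|j\rangle=|j+1\bmod d\rangle$, $Z|j\rangle=e^{2\pi ij/d}|j\rangle$; $P_{\vec a}=\bigotimes_iP_{a_i}$, $|\vec a|=\#\{i:a_i\ne(0,0)\}$; weight-1 Pauli operators are $P_{\vec a}$ with $|\vec a|=1$. $\|A\|_2=(d^{-n}\mathrm{Tr}(A^\dagger A))^{1/2}$; for $\|O\|_2=1$, $P_O[\vec a]=d^{-2n}|\mathrm{Tr}(OP_{\vec a})|^2$ and $H[O]=-\sum_{\vec a}P_O[\vec a]\log P_O[\vec a]$. The magic entropy is $M[U]=\max_{O\text{ weight-1 Pauli}}H[UOU^\dagger]$. A Clifford unitary is a unitary mapping each Pauli operator $P_{\vec a}$ under conjugation to a Pauli operator up to a scalar phase. *)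

theory Defs
  imports Complex_Main
begin

text \<open>n-qudit operators are represented as matrices indexed by computational basis
  states; a basis state is a function x :: nat => nat with x i < d for i < n and
  x i = 0 for i >= n.\<close>

type_synonym qop = "(nat \<Rightarrow> nat) \<Rightarrow> (nat \<Rightarrow> nat) \<Rightarrow> complex"

definition qbasis :: "nat \<Rightarrow> nat \<Rightarrow> (nat \<Rightarrow> nat) set" where
  "qbasis d n = {x. (\<forall>i<n. x i < d) \<and> (\<forall>i\<ge>n. x i = 0)}"

definition omega :: "nat \<Rightarrow> complex" where
  "omega d = exp (2 * of_real pi * \<i> / of_nat d)"

text \<open>Single-qudit Pauli X^s Z^t: X^s Z^t |k> = omega^(t k) |k+s mod d>.\<close>
definition pauli1 :: "nat \<Rightarrow> nat \<times> nat \<Rightarrow> nat \<Rightarrow> nat \<Rightarrow> complex" where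
  "pauli1 d a j k = (if j = (k + fst a) mod d then omega d ^ (snd a * k) else 0)"

definition pauli :: "nat \<Rightarrow> nat \<Rightarrow> (nat \<Rightarrow> nat \<times> nat) \<Rightarrow> qop" where
  "pauli d n a x y = (\<Prod>i<n. pauli1 d (a i) (x i) (y i))"

definition paulivecs :: "nat \<Rightarrow> nat \<Rightarrow> (nat \<Rightarrow> nat \<times> nat) set" where
  "paulivecs d n = {a. (\<forall>i<n. fst (a i) < d \<and> snd (a i) < d) \<and> (\<forall>i\<ge>n. a i = (0, 0))}"

definition pweight :: "nat \<Rightarrow> (nat \<Rightarrow> nat \<times> nat) \<Rightarrow> nat" where
  "pweight n a = card {i. i < n \<and> a i \<noteq> (0, 0)}"

definition qmul :: "nat \<Rightarrow> nat \<Rightarrow> qop \<Rightarrow> qop \<Rightarrow> qop" where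
  "qmul d n A B x y = (\<Sum>z\<in>qbasis d n. A x z * B z y)"

definition qadj :: "qop \<Rightarrow> qop" where
  "qadj A x y = cnj (A y x)"

definition qtr :: "nat \<Rightarrow> nat \<Rightarrow> qop \<Rightarrow> complex" where
  "qtr d n A = (\<Sum>x\<in>qbasis d n. A x x)"

definition qid :: qop where
  "qid x y = (if x = y then 1 else 0)"

definition qunitary :: "nat \<Rightarrow> nat \<Rightarrow> qop \<Rightarrow> bool" where
  "qunitary d n U \<longleftrightarrow>
     (\<forall>x\<in>qbasis d n. \<forall>y\<in>qbasis d n.
        qmul d n (qadj U) U x y = qid x y \<and> qmul d n U (qadj U) x y = qid x y)"

definition qconj :: "nat \<Rightarrow> nat \<Rightarrow> qop \<Rightarrow> qop \<Rightarrow> qop" where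
  "qconj d n U Q = qmul d n U (qmul d n Q (qadj U))"

definition pauli_prob :: "nat \<Rightarrow> nat \<Rightarrow> qop \<Rightarrow> (nat \<Rightarrow> nat \<times> nat) \<Rightarrow> real" where
  "pauli_prob d n Q a = (cmod (qtr d n (qmul d n Q (pauli d n a))))\<^sup>2 / real d ^ (2 * n)"

definition pauli_entropy :: "nat \<Rightarrow> nat \<Rightarrow> qop \<Rightarrow> real" where
  "pauli_entropy d n Q =
     - (\<Sum>a\<in>paulivecs d n. (let p = pauli_prob d n Q a in if p = 0 then 0 else p * ln p))"

definition magic :: "nat \<Rightarrow> nat \<Rightarrow> qop \<Rightarrow> real" where
  "magic d n U = Max ((\<lambda>a. pauli_entropy d n (qconj d n U (pauli d n a)))
                        ` {a \<in> paulivecs d n. pweight n a = 1})"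

definition clifford :: "nat \<Rightarrow> nat \<Rightarrow> qop \<Rightarrow> bool" where
  "clifford d n U \<longleftrightarrow> qunitary d n U \<and>
     (\<forall>a\<in>paulivecs d n. \<exists>b\<in>paulivecs d n. \<exists>c. cmod c = 1 \<and>
        (\<forall>x\<in>qbasis d n. \<forall>y\<in>qbasis d n.
           qconj d n U (pauli d n a) x y = c * pauli d n b x y))"

text \<open>U1 (on qudits 0..n1-1) tensor U2 (on the following qudits).\<close>
definition qtensor :: "nat \<Rightarrow> qop \<Rightarrow> qop \<Rightarrow> qop" where
  "qtensor n1 U1 U2 x y =
     U1 (\<lambda>i. if i < n1 then x i else 0) (\<lambda>i. if i < n1 then y i else 0)
     * U2 (\<lambda>i. x (i + n1)) (\<lambda>i. y (i + n1))"

end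

theory Submission
  imports Defs "HOL-Analysis.Complex_Transcendental"
begin

lemma omega_pow: "omega d ^ j = exp (2 * of_real pi * \<i> * of_nat j / of_nat d)"
  unfolding omega_def by (simp add: exp_of_nat_mult[symmetric] algebra_simps)

lemma omega_pow_eq: "d \<ge> 1 \<Longrightarrow> omega d ^ a = omega d ^ b \<longleftrightarrow> a mod d = b mod d"
  by (simp add: omega_pow complex_root_unity_eq)

lemma omega_pow_1: "d \<ge> 1 \<Longrightarrow> omega d ^ a = 1 \<longleftrightarrow> d dvd a"
  by (simp add: omega_pow complex_root_unity_eq_1)

lemma omega_pow_d: "d \<ge> 1 \<Longrightarrow> omega d ^ d = 1"
  by (simp add: omega_pow_1)

lemma omega_pow_mod: "d \<ge> 1 \<Longrightarrow> omega d ^ (a mod d) = omega d ^ a"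
  by (simp add: omega_pow_eq)

lemma cmod_omega: "cmod (omega d) = 1"
  unfolding omega_def by (simp add: norm_exp_eq_Re)

lemma cmod_omega_pow[simp]: "cmod (omega d ^ k) = 1"
  by (simp add: norm_power cmod_omega)

lemma omega_nz[simp]: "omega d ^ k \<noteq> 0"
  using cmod_omega_pow[of d k] by (metis norm_zero zero_neq_one)

lemma cnj_omega_pow: "d \<ge> 1 \<Longrightarrow> cnj (omega d ^ k) = omega d ^ ((d - 1) * k)"
proof -
  assume d: "d \<ge> 1"
  have "cnj (omega d ^ k) * omega d ^ k = 1"
    by (metis cmod_omega_pow complex_norm_square mult.commute of_real_1 power_one)
  moreover have "omega d ^ ((d - 1) * k) * omega d ^ k = 1"
  proof -
    have "omega d ^ ((d - 1) * k) * omega d ^ k = omega d ^ (d * k)"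
      using d by (simp add: power_add[symmetric] algebra_simps)
    also have "\<dots> = 1" using d by (simp add: omega_pow_1)
    finally show ?thesis .
  qed
  ultimately show ?thesis
    by (metis mult_cancel_right omega_nz)
qed

lemma geo_omega: "d \<ge> 1 \<Longrightarrow> (\<Sum>k<d. omega d ^ (m * k)) = (if d dvd m then of_nat d else 0)"
proof (cases "d dvd m")
  case True
  assume d: "d \<ge> 1"
  have "omega d ^ (m * k) = 1" for k using True d
    by (simp add: omega_pow_1)
  then show ?thesis using True by simp
next
  case False
  assume d: "d \<ge> 1"
  let ?z = "omega d ^ m"
  have z1: "?z \<noteq> 1" using False d by (simp add: omega_pow_1)
  have "(\<Sum>k<d. omega d ^ (m * k)) = (\<Sum>k<d. ?z ^ k)" by (simp add: power_mult)
  also have "\<dots> = (?z ^ d - 1) / (?z - 1)" using z1 by (rule geometric_sum)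
  also have "?z ^ d = 1" using d by (simp add: power_mult[symmetric] omega_pow_1)
  finally show ?thesis using False by simp
qed

lemma char_orth: assumes d: "d \<ge> 1" and k: "k < d" "k' < d"
  shows "(\<Sum>t<d. omega d ^ (t * k) * cnj (omega d ^ (t * k'))) = (if k = k' then of_nat d else 0)"
proof -
  have "(\<Sum>t<d. omega d ^ (t * k) * cnj (omega d ^ (t * k'))) = (\<Sum>t<d. omega d ^ ((k + (d-1)*k') * t))"
  proof (rule sum.cong[OF refl])
    fix t
    have "omega d ^ (t * k) * cnj (omega d ^ (t * k')) = omega d ^ (t * k) * omega d ^ ((d - 1) * (t * k'))"
      using d by (simp only: cnj_omega_pow)
    also have "\<dots> = omega d ^ ((k + (d-1)*k') * t)"
      by (simp add: power_add[symmetric] algebra_simps)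
    finally show "omega d ^ (t * k) * cnj (omega d ^ (t * k')) = omega d ^ ((k + (d-1)*k') * t)" .
  qed
  also have "\<dots> = (if d dvd (k + (d-1)*k') then of_nat d else 0)" using d by (rule geo_omega)
  moreover have "(d dvd (k + (d-1)*k')) \<longleftrightarrow> k = k'"
  proof -
    have "int (k + (d-1)*k') = (int k - int k') + int d * int k'" proof -
      obtain e where "d = Suc e" using d by (cases d) auto
      thus ?thesis by (simp add: algebra_simps)
    qed
    hence "(d dvd (k + (d-1)*k')) \<longleftrightarrow> int d dvd (int k - int k')"
    proof -
      assume h: "int (k + (d-1)*k') = (int k - int k') + int d * int k'"
      have "(d dvd (k + (d-1)*k')) \<longleftrightarrow> int d dvd int (k + (d-1)*k')" by (simp only: int_dvd_int_iff)
      also have "\<dots> \<longleftrightarrow> int d dvd ((int k - int k') + int d * int k')" by (simp only: h)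
      also have "\<dots> \<longleftrightarrow> int d dvd (int k - int k')" by (simp only: mult.commute[of "int d" "int k'"] dvd_add_times_triv_right_iff)
      finally show ?thesis .
    qed
    also have "\<dots> \<longleftrightarrow> k = k'"
    proof
      assume "int d dvd (int k - int k')"
      moreover have "\<bar>int k - int k'\<bar> < int d" using k by auto
      ultimately show "k = k'"
      proof (cases "k = k'")
        case False
        assume a1: "int d dvd (int k - int k')" and a2: "\<bar>int k - int k'\<bar> < int d"
        have "int k - int k' \<noteq> 0" using False by simp
        hence "\<bar>int d\<bar> \<le> \<bar>int k - int k'\<bar>" using a1 by (rule dvd_imp_le_int)
        thus ?thesis using a2 by simp
      qed
    qed simp
    finally show ?thesis .
  qed
  ultimately show ?thesis by (simp only:)
qed


lemma uniq_shift: fixes d j s :: nat assumes "0 < d" "j < d"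
  shows "{k. k < d \<and> j = (k + s) mod d} = {(j + (d - s mod d)) mod d}"
proof -
  define m where "m = s mod d"
  define q where "q = s div d"
  have s: "s = d * q + m" unfolding m_def q_def by (metis div_mult_mod_eq mult.commute)
  have m: "m < d" unfolding m_def using assms by simp
  define k0 where "k0 = (j + (d - m)) mod d"
  have "(k0 + s) mod d = (j + (d - m) + s) mod d" unfolding k0_def by (rule mod_add_left_eq)
  also have "j + (d - m) + s = j + d * (1 + q)"
    using m s by (simp add: distrib_left)
  also have "(j + d * (1 + q)) mod d = j" using assms by (metis mod_less mod_mult_self2 mult.commute)
  finally have k0: "(k0 + s) mod d = j" .
  have k0d: "k0 < d" unfolding k0_def using assms by simp
  have uq: "k = k0" if "k < d" "j = (k + s) mod d" for k
  proof -
    have "k = (k + d * (1 + q)) mod d" using that by (metis mod_less mod_mult_self2 mult.commute)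
    also have "k + d * (1 + q) = k + s + (d - m)" using m s by (simp add: distrib_left)
    also have "(k + s + (d - m)) mod d = ((k + s) mod d + (d - m)) mod d" by (metis mod_add_left_eq)
    also have "\<dots> = k0" unfolding k0_def using that by simp
    finally show ?thesis .
  qed
  show ?thesis
  proof (rule set_eqI, rule iffI)
    fix k assume "k \<in> {k. k < d \<and> j = (k + s) mod d}"
    thus "k \<in> {(j + (d - s mod d)) mod d}" using uq unfolding k0_def m_def by blast
  next
    fix k assume "k \<in> {(j + (d - s mod d)) mod d}"
    thus "k \<in> {k. k < d \<and> j = (k + s) mod d}" using k0 k0d unfolding k0_def m_def by simp
  qed
qed

lemma sum_shift:
  fixes d j s :: nat and f :: "nat \<Rightarrow> 'a::comm_monoid_add"
  assumes "0 < d" "j < d"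
  shows "(\<Sum>k<d. if j = (k + s) mod d then f k else 0) = f ((j + (d - s mod d)) mod d)"
proof -
  have "(\<Sum>k<d. if j = (k + s) mod d then f k else 0) = sum f {k \<in> {..<d}. j = (k + s) mod d}"
    using sum.inter_filter[of "{..<d}" f "\<lambda>k. j = (k+s) mod d"] by simp
  also have "{k \<in> {..<d}. j = (k + s) mod d} = {(j + (d - s mod d)) mod d}"
    using uniq_shift[OF assms, of s] by auto
  finally show ?thesis by simp
qed

lemma sum_shift1:
  fixes d j s :: nat
  assumes "0 < d" "j < d"
  shows "(\<Sum>k<d. if j = (k + s) mod d then (c::'a::comm_monoid_add) else 0) = c"
  using sum_shift[OF assms, of s "\<lambda>_. c"] by simp

lemma self_shift:
  fixes d k s :: nat
  assumes "k < d" "s < d"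
  shows "k = (k + s) mod d \<longleftrightarrow> s = 0"
proof (cases "k + s < d")
  case True thus ?thesis by simp
next
  case False
  hence "(k + s) mod d = k + s - d" using assms by (simp add: mod_if)
  thus ?thesis using assms False by simp
qed

lemma p1_zero: "j < d \<Longrightarrow> k < d \<Longrightarrow> pauli1 d (0,0) j k = (if j = k then 1 else 0)"
  by (simp add: pauli1_def)

lemma p1_trace:
  fixes d s t :: nat
  assumes "d \<ge> 1" "s < d" "t < d"
  shows "(\<Sum>k<d. pauli1 d (s,t) k k) = (if s = 0 \<and> t = 0 then of_nat d else 0)"
proof (cases "s = 0")
  case False
  have "pauli1 d (s,t) k k = 0" if "k < d" for k
    using self_shift[OF that assms(2)] False by (simp add: pauli1_def)
  thus ?thesis using False by simp
next
  case True
  have "(\<Sum>k<d. pauli1 d (s,t) k k) = (\<Sum>k<d. omega d ^ (t * k))"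
    using True by (simp add: pauli1_def)
  also have "\<dots> = (if d dvd t then of_nat d else 0)" by (rule geo_omega[OF assms(1)])
  also have "(d dvd t) \<longleftrightarrow> t = 0" using assms(3) by (metis dvd_0_right dvd_imp_le not_gr0 not_le)
  finally show ?thesis using True by simp
qed

lemma omega_mod_mult: "d \<ge> 1 \<Longrightarrow> omega d ^ ((a mod d) * (b mod d)) = omega d ^ (a * b)"
  by (simp add: omega_pow_eq mod_mult_eq)

lemma p1_mult:
  fixes d s t s' t' j l :: nat
  assumes d: "d \<ge> 1" and jl: "j < d" "l < d"
  shows "(\<Sum>k<d. pauli1 d (s,t) j k * pauli1 d (s',t') k l)
       = omega d ^ (t * s') * pauli1 d ((s + s') mod d, (t + t') mod d) j l"
proof -
  let ?k0 = "(l + s') mod d"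
  have "(\<Sum>k<d. pauli1 d (s,t) j k * pauli1 d (s',t') k l)
      = (\<Sum>k<d. if k = ?k0 then pauli1 d (s,t) j ?k0 * omega d ^ (t' * l) else 0)"
    by (rule sum.cong) (auto simp: pauli1_def)
  also have "\<dots> = pauli1 d (s,t) j ?k0 * omega d ^ (t' * l)"
    using d by (simp add: sum.delta)
  also have "\<dots> = omega d ^ (t * s') * pauli1 d ((s + s') mod d, (t + t') mod d) j l"
  proof -
    have c: "(?k0 + s) mod d = (l + (s + s') mod d) mod d"
      by (metis add.assoc add.commute mod_add_left_eq mod_add_right_eq)
    have v1: "omega d ^ (t * ?k0) = omega d ^ (t * (l + s'))"
      using d by (simp add: omega_pow_eq mod_mult_right_eq)
    have v2: "omega d ^ (((t + t') mod d) * l) = omega d ^ ((t + t') * l)"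
      using d by (simp add: omega_pow_eq mod_mult_left_eq)
    have v3: "omega d ^ (t * (l + s')) * omega d ^ (t' * l) = omega d ^ (t * s') * omega d ^ ((t + t') * l)"
      by (simp add: power_add[symmetric] algebra_simps)
    show ?thesis unfolding pauli1_def using c v1 v2 v3 by simp
  qed
  finally show ?thesis .
qed

lemma p1_adj:
  fixes d s t j k :: nat
  assumes d: "d \<ge> 1" and st: "s < d" "t < d" and jk: "j < d" "k < d"
  shows "cnj (pauli1 d (s,t) k j) = omega d ^ (t * s) * pauli1 d ((d - s) mod d, (d - t) mod d) j k"
proof -
  have c: "k = (j + s) mod d \<longleftrightarrow> j = (k + (d - s) mod d) mod d"
  proof
    assume h: "k = (j + s) mod d"
    have "(k + (d - s) mod d) mod d = (k + (d - s)) mod d" by (metis mod_add_right_eq)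
    also have "\<dots> = ((j + s) mod d + (d - s)) mod d" using h by simp
    also have "\<dots> = (j + s + (d - s)) mod d" by (metis mod_add_left_eq)
    also have "j + s + (d - s) = j + d" using st by simp
    finally show "j = (k + (d - s) mod d) mod d" using jk by simp
  next
    assume h: "j = (k + (d - s) mod d) mod d"
    have "(j + s) mod d = ((k + (d - s) mod d) mod d + s) mod d" using h by simp
    also have "\<dots> = (k + (d - s) mod d + s) mod d" by (metis mod_add_left_eq)
    also have "\<dots> = (k + (d - s) + s) mod d" by (metis mod_add_left_eq mod_add_right_eq add.assoc add.commute)
    also have "k + (d - s) + s = k + d" using st by simp
    finally show "k = (j + s) mod d" using jk by simp
  qed
  show ?thesis
  proof (cases "k = (j + s) mod d")
    case False thus ?thesis using c by (simp add: pauli1_def)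
  next
    case True
    have lhs: "cnj (pauli1 d (s,t) k j) = omega d ^ ((d - 1) * (t * j))"
      using True d cnj_omega_pow[OF d, of "t*j"] by (simp add: pauli1_def)
    have rhs: "omega d ^ (t * s) * pauli1 d ((d - s) mod d, (d - t) mod d) j k
             = omega d ^ (t * s) * omega d ^ (((d - t) mod d) * ((j + s) mod d))"
      using True c by (simp add: pauli1_def)
    have e1: "omega d ^ ((d - 1) * (t * j)) * omega d ^ (t * j) = 1"
    proof -
      have "omega d ^ ((d - 1) * (t * j)) * omega d ^ (t * j) = omega d ^ (d * (t * j))"
        using d by (simp add: power_add[symmetric] algebra_simps)
      thus ?thesis using d by (simp add: omega_pow_1)
    qed
    have e2: "omega d ^ (t * s) * omega d ^ (((d - t) mod d) * ((j + s) mod d)) * omega d ^ (t * j) = 1"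
    proof -
      have "omega d ^ (((d - t) mod d) * ((j + s) mod d)) = omega d ^ ((d - t) * (j + s))"
        using d by (rule omega_mod_mult)
      moreover have "t * s + (d - t) * (j + s) + t * j = d * (j + s)"
      proof -
        have "(d - t) * (j + s) + t * (j + s) = d * (j + s)" using st
          by (metis add_mult_distrib le_add_diff_inverse2 less_imp_le_nat)
        thus ?thesis by (simp add: algebra_simps)
      qed
      ultimately have "omega d ^ (t * s) * omega d ^ (((d - t) mod d) * ((j + s) mod d)) * omega d ^ (t * j)
          = omega d ^ (d * (j + s))"
        by (metis power_add)
      thus ?thesis using d by (simp add: omega_pow_1)
    qed
    show ?thesis using e1 e2 lhs rhs
      by (metis mult_cancel_right omega_nz)
  qed
qed

lemma p1_unit:
  fixes d s t j j' :: nat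
  assumes d: "d \<ge> 1" and jj: "j < d" "j' < d"
  shows "(\<Sum>k<d. pauli1 d (s,t) j k * cnj (pauli1 d (s,t) j' k)) = (if j = j' then 1 else 0)"
proof -
  have "(\<Sum>k<d. pauli1 d (s,t) j k * cnj (pauli1 d (s,t) j' k))
      = (\<Sum>k<d. if j = (k + s) mod d then (if j = j' then 1 else 0) else 0)"
  proof (rule sum.cong[OF refl])
    fix k
    have "omega d ^ (t * k) * cnj (omega d ^ (t * k)) = 1"
      by (metis cmod_omega_pow complex_norm_square of_real_1 power_one)
    thus "pauli1 d (s,t) j k * cnj (pauli1 d (s,t) j' k) = (if j = (k + s) mod d then (if j = j' then 1 else 0) else 0)"
      by (auto simp: pauli1_def)
  qed
  also have "\<dots> = (if j = j' then 1 else 0)" using d jj by (intro sum_shift1) auto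
  finally show ?thesis .
qed

lemma p1_parseval:
  fixes d j k j' k' :: nat
  assumes d: "d \<ge> 1" and r: "j < d" "k < d" "j' < d" "k' < d"
  shows "(\<Sum>a\<in>{..<d} \<times> {..<d}. pauli1 d a j k * cnj (pauli1 d a j' k'))
       = (if j = j' \<and> k = k' then of_nat d else 0)"
proof -
  have "(\<Sum>a\<in>{..<d} \<times> {..<d}. pauli1 d a j k * cnj (pauli1 d a j' k'))
      = (\<Sum>s<d. \<Sum>t<d. pauli1 d (s,t) j k * cnj (pauli1 d (s,t) j' k'))"
    by (simp add: sum.cartesian_product)
  also have "\<dots> = (\<Sum>s<d. if j = (k + s) mod d \<and> j' = (k' + s) mod d
                       then (\<Sum>t<d. omega d ^ (t * k) * cnj (omega d ^ (t * k'))) else 0)"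
    by (rule sum.cong[OF refl]) (auto simp: pauli1_def)
  also have "\<dots> = (\<Sum>s<d. if j = (k + s) mod d \<and> j' = (k' + s) mod d
                       then (if k = k' then of_nat d else 0) else 0)"
    by (simp only: char_orth[OF d r(2) r(4)])
  also have "\<dots> = (if j = j' \<and> k = k' then of_nat d else 0)"
  proof (cases "k = k'")
    case True
    have "(\<Sum>s<d. if j = (k + s) mod d \<and> j' = (k' + s) mod d then (if k = k' then of_nat d else 0) else 0)
        = (\<Sum>s<d. if j = (s + k) mod d then (if j = j' then of_nat d else 0) else (0::complex))"
      using True by (intro sum.cong) (auto simp: add.commute)
    also have "\<dots> = (if j = j' then of_nat d else 0)" using d r by (intro sum_shift1) auto
    finally show ?thesis using True by simp
  qed simp
  finally show ?thesis .
qed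


section \<open>Finite function spaces\<close>

definition fs :: "'a set \<Rightarrow> 'a \<Rightarrow> nat \<Rightarrow> (nat \<Rightarrow> 'a) set" where
  "fs A z n = {x. (\<forall>i<n. x i \<in> A) \<and> (\<forall>i\<ge>n. x i = z)}"

lemma qbasis_fs: "qbasis d n = fs {..<d} 0 n"
  by (auto simp: qbasis_def fs_def)

lemma pv_fs: "paulivecs d n = fs ({..<d} \<times> {..<d}) (0,0) n"
  by (auto simp: paulivecs_def fs_def mem_Times_iff)

lemma finite_fs: assumes "finite A" shows "finite (fs A z n)"
proof -
  have "fs A z n = {f. \<forall>x. (x \<in> {..<n} \<longrightarrow> f x \<in> A) \<and> (x \<notin> {..<n} \<longrightarrow> f x = z)}"
    by (auto simp: fs_def not_less)
  thus ?thesis using finite_set_of_finite_funs[OF _ assms, of "{..<n}" z] by simp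
qed

lemma fs_eq_iff: assumes "x \<in> fs A z n" "y \<in> fs A z n" shows "(\<forall>i<n. x i = y i) \<longleftrightarrow> x = y"
proof
  assume h: "\<forall>i<n. x i = y i"
  show "x = y"
  proof
    fix i show "x i = y i" using h assms by (cases "i < n") (auto simp: fs_def)
  qed
qed simp

lemma fs_Suc: "fs A z (Suc n) = (\<lambda>(x,k). x(n := k)) ` (fs A z n \<times> A)"
proof (rule set_eqI, rule iffI)
  fix y assume y: "y \<in> fs A z (Suc n)"
  let ?x = "y(n := z)"
  have "?x \<in> fs A z n" using y by (auto simp: fs_def)
  moreover have "y n \<in> A" using y by (auto simp: fs_def)
  moreover have "y = ?x(n := y n)" by simp
  ultimately show "y \<in> (\<lambda>(x,k). x(n := k)) ` (fs A z n \<times> A)"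
    by (intro image_eqI[where x="(y(n := z), y n)"]) auto
next
  fix y assume "y \<in> (\<lambda>(x,k). x(n := k)) ` (fs A z n \<times> A)"
  thus "y \<in> fs A z (Suc n)" by (auto simp: fs_def less_Suc_eq)
qed

lemma fs_Suc_inj: "inj_on (\<lambda>(x,k). x(n := k)) (fs A z n \<times> A)"
proof (rule inj_onI, clarify)
  fix x k x' k' assume h: "x \<in> fs A z n" "k \<in> A" "x' \<in> fs A z n" "k' \<in> A" "x(n := k) = x'(n := k')"
  have "k = k'" using fun_cong[OF h(5), of n] by simp
  moreover have "x = x'"
  proof
    fix i show "x i = x' i"
    proof (cases "i = n")
      case True thus ?thesis using h(1,3) by (simp add: fs_def)
    next
      case False thus ?thesis using fun_cong[OF h(5), of i] by simp
    qed
  qed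
  ultimately show "x = x' \<and> k = k'" by simp
qed

lemma sum_prod_fs:
  fixes f :: "nat \<Rightarrow> 'a \<Rightarrow> 'b::comm_semiring_1"
  assumes A: "finite A"
  shows "(\<Sum>x\<in>fs A z n. \<Prod>i<n. f i (x i)) = (\<Prod>i<n. \<Sum>k\<in>A. f i k)"
proof (induction n)
  case 0
  have "fs A z 0 = {\<lambda>_. z}" by (auto simp: fs_def)
  thus ?case by simp
next
  case (Suc n)
  have "(\<Sum>x\<in>fs A z (Suc n). \<Prod>i<Suc n. f i (x i))
      = (\<Sum>p\<in>fs A z n \<times> A. \<Prod>i<Suc n. f i (((\<lambda>(x,k). x(n := k)) p) i))"
    unfolding fs_Suc by (rule sum.reindex[OF fs_Suc_inj, unfolded comp_def])
  also have "\<dots> = (\<Sum>(x,k)\<in>fs A z n \<times> A. (\<Prod>i<n. f i (x i)) * f n k)"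
  proof (rule sum.cong[OF refl], clarify)
    fix x k
    have "(\<Prod>i<n. f i ((x(n := k)) i)) = (\<Prod>i<n. f i (x i))"
      by (rule prod.cong) auto
    thus "(\<Prod>i<Suc n. f i ((x(n := k)) i)) = (\<Prod>i<n. f i (x i)) * f n k" by simp
  qed
  also have "\<dots> = (\<Sum>x\<in>fs A z n. \<Sum>k\<in>A. (\<Prod>i<n. f i (x i)) * f n k)"
    by (rule sum.cartesian_product[symmetric])
  also have "\<dots> = (\<Sum>x\<in>fs A z n. \<Prod>i<n. f i (x i)) * (\<Sum>k\<in>A. f n k)"
    by (rule sum_product[symmetric])
  also have "\<dots> = (\<Prod>i<Suc n. \<Sum>k\<in>A. f i k)" using Suc by simp
  finally show ?case .
qed

lemma card_qbasis: "card (qbasis d n) = d ^ n"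
proof -
  have "real (card (qbasis d n)) = (\<Sum>x\<in>fs {..<d} 0 n. \<Prod>i<n. (\<lambda>i k. 1::real) i (x i))"
    by (simp add: qbasis_fs)
  also have "\<dots> = real d ^ n" by (subst sum_prod_fs) auto
  finally show ?thesis by (metis of_nat_eq_iff of_nat_power)
qed

lemma finite_qbasis[simp]: "finite (qbasis d n)" by (simp add: qbasis_fs finite_fs)
lemma finite_pv[simp]: "finite (paulivecs d n)" by (simp add: pv_fs finite_fs)

lemma prod_indicator:
  "(\<Prod>i<n. if P i then (c::'a::comm_semiring_1) else 0) = (if \<forall>i<n. P i then c ^ n else 0)"
  by (induction n) (auto simp: less_Suc_eq mult.commute)

definition fL :: "'a \<Rightarrow> nat \<Rightarrow> (nat \<Rightarrow> 'a) \<Rightarrow> nat \<Rightarrow> 'a" where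
  "fL z n1 x = (\<lambda>i. if i < n1 then x i else z)"
definition fR :: "nat \<Rightarrow> (nat \<Rightarrow> 'a) \<Rightarrow> nat \<Rightarrow> 'a" where
  "fR n1 x = (\<lambda>i. x (i + n1))"
definition fJ :: "nat \<Rightarrow> (nat \<Rightarrow> 'a) \<Rightarrow> (nat \<Rightarrow> 'a) \<Rightarrow> nat \<Rightarrow> 'a" where
  "fJ n1 x1 x2 = (\<lambda>i. if i < n1 then x1 i else x2 (i - n1))"

lemma fL_fJ: "x1 \<in> fs A z n1 \<Longrightarrow> fL z n1 (fJ n1 x1 x2) = x1"
  by (auto simp: fL_def fJ_def fs_def)
lemma fR_fJ: "fR n1 (fJ n1 x1 x2) = x2"
  by (auto simp: fR_def fJ_def)
lemma fJ_fs: "x1 \<in> fs A z n1 \<Longrightarrow> x2 \<in> fs A z n2 \<Longrightarrow> fJ n1 x1 x2 \<in> fs A z (n1 + n2)"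
  by (auto simp: fJ_def fs_def)
lemma fL_fs: "x \<in> fs A z (n1 + n2) \<Longrightarrow> fL z n1 x \<in> fs A z n1"
  by (auto simp: fL_def fs_def)
lemma fR_fs: "x \<in> fs A z (n1 + n2) \<Longrightarrow> fR n1 x \<in> fs A z n2"
  by (auto simp: fR_def fs_def)
lemma fJ_fLR: "x \<in> fs A z (n1 + n2) \<Longrightarrow> fJ n1 (fL z n1 x) (fR n1 x) = x"
  by (auto simp: fJ_def fL_def fR_def fs_def)

lemma sum_split_fs:
  "(\<Sum>x\<in>fs A z (n1 + n2). g x) = (\<Sum>x1\<in>fs A z n1. \<Sum>x2\<in>fs A z n2. g (fJ n1 x1 x2))"
proof -
  have inj: "inj_on (\<lambda>(x1,x2). fJ n1 x1 x2) (fs A z n1 \<times> fs A z n2)"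
    by (rule inj_onI) (auto, metis fL_fJ, metis fR_fJ)
  have img: "(\<lambda>(x1,x2). fJ n1 x1 x2) ` (fs A z n1 \<times> fs A z n2) = fs A z (n1 + n2)"
  proof (rule set_eqI, rule iffI)
    fix x assume "x \<in> (\<lambda>(x1,x2). fJ n1 x1 x2) ` (fs A z n1 \<times> fs A z n2)"
    thus "x \<in> fs A z (n1 + n2)" using fJ_fs by auto
  next
    fix x assume x: "x \<in> fs A z (n1 + n2)"
    hence "(fL z n1 x, fR n1 x) \<in> fs A z n1 \<times> fs A z n2" using fL_fs fR_fs by auto
    moreover have "x = (\<lambda>(x1,x2). fJ n1 x1 x2) (fL z n1 x, fR n1 x)" using fJ_fLR[OF x] by simp
    ultimately show "x \<in> (\<lambda>(x1,x2). fJ n1 x1 x2) ` (fs A z n1 \<times> fs A z n2)" by blast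
  qed
  have "(\<Sum>x\<in>fs A z (n1 + n2). g x) = (\<Sum>p\<in>fs A z n1 \<times> fs A z n2. g ((\<lambda>(x1,x2). fJ n1 x1 x2) p))"
    unfolding img[symmetric] by (rule sum.reindex[OF inj, unfolded comp_def])
  also have "\<dots> = (\<Sum>x1\<in>fs A z n1. \<Sum>x2\<in>fs A z n2. g (fJ n1 x1 x2))"
    unfolding sum.cartesian_product by (rule sum.cong) auto
  finally show ?thesis .
qed


section \<open>Matrix algebra on the basis\<close>

lemma qmul_assoc: "qmul d n (qmul d n A B) C = qmul d n A (qmul d n B C)"
proof (intro ext)
  fix x y
  show "qmul d n (qmul d n A B) C x y = qmul d n A (qmul d n B C) x y"
    unfolding qmul_def
    by (simp add: sum_distrib_left sum_distrib_right mult.assoc) (rule sum.swap)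
qed

lemma qadj_qmul: "qadj (qmul d n A B) = qmul d n (qadj B) (qadj A)"
  by (intro ext) (simp add: qadj_def qmul_def mult.commute)

lemma qadj_qadj[simp]: "qadj (qadj A) = A"
  by (intro ext) (simp add: qadj_def)

lemma qmul_rows: "(\<And>z y. z \<in> qbasis d n \<Longrightarrow> A z y = A' z y) \<Longrightarrow> qmul d n X A = qmul d n X A'"
  by (intro ext) (simp add: qmul_def)

lemma qmul_cols: "(\<And>z x. z \<in> qbasis d n \<Longrightarrow> X x z = X' x z) \<Longrightarrow> qmul d n X A = qmul d n X' A"
  by (intro ext) (simp add: qmul_def)

lemma qmul_sandwich:
  assumes "\<And>z w. z \<in> qbasis d n \<Longrightarrow> w \<in> qbasis d n \<Longrightarrow> M z w = M' z w"
  shows "qmul d n X (qmul d n M Y) = qmul d n X (qmul d n M' Y)"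
  by (rule qmul_rows) (simp add: qmul_def assms)

lemma qmul_idB_left:
  assumes "\<And>x y. x \<in> qbasis d n \<Longrightarrow> y \<in> qbasis d n \<Longrightarrow> M x y = qid x y" "x \<in> qbasis d n"
  shows "qmul d n M A x y = A x y"
proof -
  have "qmul d n M A x y = (\<Sum>z\<in>qbasis d n. (if x = z then A z y else 0))"
    unfolding qmul_def by (rule sum.cong) (auto simp: assms qid_def)
  also have "\<dots> = A x y" using assms(2) by simp
  finally show ?thesis .
qed

lemma qmul_idB_right:
  assumes "\<And>x y. x \<in> qbasis d n \<Longrightarrow> y \<in> qbasis d n \<Longrightarrow> M x y = qid x y" "y \<in> qbasis d n"
  shows "qmul d n A M x y = A x y"
proof -
  have "qmul d n A M x y = (\<Sum>z\<in>qbasis d n. (if z = y then A x z else 0))"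
    unfolding qmul_def by (rule sum.cong) (auto simp: assms qid_def)
  also have "\<dots> = A x y" using assms(2) by simp
  finally show ?thesis .
qed

definition isid :: "nat \<Rightarrow> nat \<Rightarrow> qop \<Rightarrow> bool" where
  "isid d n M \<longleftrightarrow> (\<forall>x\<in>qbasis d n. \<forall>y\<in>qbasis d n. M x y = qid x y)"

lemma cancel0:
  assumes "isid d n (qmul d n A A')" "x \<in> qbasis d n"
  shows "qmul d n A (qmul d n A' C) x y = C x y"
  using assms qmul_idB_left[of d n "qmul d n A A'" x C y]
  by (simp add: qmul_assoc[symmetric] isid_def)

lemma cancel:
  assumes "isid d n (qmul d n A A')"
  shows "qmul d n X (qmul d n A (qmul d n A' C)) = qmul d n X C"
  by (rule qmul_rows) (simp add: cancel0[OF assms])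

lemma cancel_end:
  assumes "isid d n (qmul d n A A')" "y \<in> qbasis d n"
  shows "qmul d n X (qmul d n A A') x y = X x y"
  using assms qmul_idB_right[of d n "qmul d n A A'" y X x] by (simp add: isid_def)

lemma qmul_scal_left: "qmul d n (\<lambda>x y. c * A x y) C x y = c * qmul d n A C x y"
  by (simp add: qmul_def sum_distrib_left mult.assoc)

lemma qmul_scal_right: "qmul d n A (\<lambda>x y. c * C x y) x y = c * qmul d n A C x y"
  by (simp add: qmul_def sum_distrib_left mult.assoc mult.left_commute)

lemma qtr_comm: "qtr d n (qmul d n A C) = qtr d n (qmul d n C A)"
  unfolding qtr_def qmul_def by (subst sum.swap) (simp add: mult.commute)

lemma qunitary_iff: "qunitary d n U \<longleftrightarrow> isid d n (qmul d n (qadj U) U) \<and> isid d n (qmul d n U (qadj U))"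
  by (auto simp: qunitary_def isid_def)

section \<open>n-qudit Pauli operators\<close>

lemma pv_range: "a \<in> paulivecs d n \<Longrightarrow> i < n \<Longrightarrow> fst (a i) < d \<and> snd (a i) < d"
  by (simp add: paulivecs_def)
lemma qb_range: "x \<in> qbasis d n \<Longrightarrow> i < n \<Longrightarrow> x i < d"
  by (simp add: qbasis_def)

definition padd :: "nat \<Rightarrow> (nat \<Rightarrow> nat \<times> nat) \<Rightarrow> (nat \<Rightarrow> nat \<times> nat) \<Rightarrow> nat \<Rightarrow> nat \<times> nat" where
  "padd d a b = (\<lambda>i. ((fst (a i) + fst (b i)) mod d, (snd (a i) + snd (b i)) mod d))"
definition pneg :: "nat \<Rightarrow> (nat \<Rightarrow> nat \<times> nat) \<Rightarrow> nat \<Rightarrow> nat \<times> nat" where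
  "pneg d a = (\<lambda>i. ((d - fst (a i)) mod d, (d - snd (a i)) mod d))"
definition pzero :: "nat \<Rightarrow> nat \<times> nat" where "pzero = (\<lambda>_. (0,0))"

lemma padd_pv: "d \<ge> 1 \<Longrightarrow> a \<in> paulivecs d n \<Longrightarrow> b \<in> paulivecs d n \<Longrightarrow> padd d a b \<in> paulivecs d n"
  by (simp add: paulivecs_def padd_def)
lemma pneg_pv: "d \<ge> 1 \<Longrightarrow> a \<in> paulivecs d n \<Longrightarrow> pneg d a \<in> paulivecs d n"
  by (simp add: paulivecs_def pneg_def)
lemma pzero_pv: "d \<ge> 1 \<Longrightarrow> pzero \<in> paulivecs d n"
  by (simp add: paulivecs_def pzero_def)

definition phm :: "nat \<Rightarrow> nat \<Rightarrow> (nat \<Rightarrow> nat \<times> nat) \<Rightarrow> (nat \<Rightarrow> nat \<times> nat) \<Rightarrow> complex" where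
  "phm d n a b = (\<Prod>i<n. omega d ^ (snd (a i) * fst (b i)))"

lemma cmod_phm[simp]: "cmod (phm d n a b) = 1"
  by (simp add: phm_def prod_norm[symmetric])

lemma p1_pair: "pauli1 d a = pauli1 d (fst a, snd a)" by simp

lemma sum_qbasis_prod:
  fixes f :: "nat \<Rightarrow> nat \<Rightarrow> 'b::comm_semiring_1"
  shows "(\<Sum>z\<in>qbasis d n. \<Prod>i<n. f i (z i)) = (\<Prod>i<n. \<Sum>k<d. f i k)"
  unfolding qbasis_fs by (rule sum_prod_fs) simp

lemma pauli_mult:
  assumes d: "d \<ge> 1" and x: "x \<in> qbasis d n" and y: "y \<in> qbasis d n"
  shows "qmul d n (pauli d n a) (pauli d n b) x y = phm d n a b * pauli d n (padd d a b) x y"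
proof -
  have "qmul d n (pauli d n a) (pauli d n b) x y
      = (\<Sum>z\<in>qbasis d n. \<Prod>i<n. pauli1 d (a i) (x i) (z i) * pauli1 d (b i) (z i) (y i))"
    unfolding qmul_def pauli_def by (simp add: prod.distrib)
  also have "\<dots> = (\<Prod>i<n. \<Sum>k<d. pauli1 d (a i) (x i) k * pauli1 d (b i) k (y i))"
    by (rule sum_qbasis_prod)
  also have "\<dots> = (\<Prod>i<n. omega d ^ (snd (a i) * fst (b i)) * pauli1 d (padd d a b i) (x i) (y i))"
  proof (rule prod.cong[OF refl])
    fix i assume "i \<in> {..<n}"
    hence "x i < d" "y i < d" using x y qb_range by auto
    thus "(\<Sum>k<d. pauli1 d (a i) (x i) k * pauli1 d (b i) k (y i))
        = omega d ^ (snd (a i) * fst (b i)) * pauli1 d (padd d a b i) (x i) (y i)"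
      using p1_mult[OF d, of "x i" "y i" "fst (a i)" "snd (a i)" "fst (b i)" "snd (b i)"]
      by (simp add: padd_def)
  qed
  also have "\<dots> = phm d n a b * pauli d n (padd d a b) x y"
    by (simp add: prod.distrib phm_def pauli_def)
  finally show ?thesis .
qed

definition pha :: "nat \<Rightarrow> nat \<Rightarrow> (nat \<Rightarrow> nat \<times> nat) \<Rightarrow> complex" where
  "pha d n a = (\<Prod>i<n. omega d ^ (snd (a i) * fst (a i)))"

lemma cmod_pha[simp]: "cmod (pha d n a) = 1"
  by (simp add: pha_def prod_norm[symmetric])

lemma pauli_adj:
  assumes d: "d \<ge> 1" and a: "a \<in> paulivecs d n" and x: "x \<in> qbasis d n" and y: "y \<in> qbasis d n"
  shows "qadj (pauli d n a) x y = pha d n a * pauli d n (pneg d a) x y"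
proof -
  have "qadj (pauli d n a) x y = (\<Prod>i<n. cnj (pauli1 d (a i) (y i) (x i)))"
    by (simp add: qadj_def pauli_def)
  also have "\<dots> = (\<Prod>i<n. omega d ^ (snd (a i) * fst (a i)) * pauli1 d (pneg d a i) (x i) (y i))"
  proof (rule prod.cong[OF refl])
    fix i assume "i \<in> {..<n}"
    hence "x i < d" "y i < d" "fst (a i) < d" "snd (a i) < d" using x y a qb_range pv_range by auto
    thus "cnj (pauli1 d (a i) (y i) (x i)) = omega d ^ (snd (a i) * fst (a i)) * pauli1 d (pneg d a i) (x i) (y i)"
      using p1_adj[OF d, of "fst (a i)" "snd (a i)" "x i" "y i"] by (simp add: pneg_def)
  qed
  also have "\<dots> = pha d n a * pauli d n (pneg d a) x y"
    by (simp add: prod.distrib pha_def pauli_def)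
  finally show ?thesis .
qed

lemma prod_qid:
  assumes "x \<in> qbasis d n" "y \<in> qbasis d n"
  shows "(\<Prod>i<n. if x i = y i then (1::complex) else 0) = qid x y"
  using fs_eq_iff[of x "{..<d}" 0 n y] assms by (simp add: prod_indicator qid_def qbasis_fs)

lemma pauli_unit:
  assumes d: "d \<ge> 1" and x: "x \<in> qbasis d n" and y: "y \<in> qbasis d n"
  shows "qmul d n (pauli d n a) (qadj (pauli d n a)) x y = qid x y"
proof -
  have "qmul d n (pauli d n a) (qadj (pauli d n a)) x y
      = (\<Sum>z\<in>qbasis d n. \<Prod>i<n. pauli1 d (a i) (x i) (z i) * cnj (pauli1 d (a i) (y i) (z i)))"
    unfolding qmul_def pauli_def qadj_def by (simp add: prod.distrib)
  also have "\<dots> = (\<Prod>i<n. \<Sum>k<d. pauli1 d (a i) (x i) k * cnj (pauli1 d (a i) (y i) k))"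
    by (rule sum_qbasis_prod)
  also have "\<dots> = (\<Prod>i<n. if x i = y i then 1 else 0)"
  proof (rule prod.cong[OF refl])
    fix i assume "i \<in> {..<n}"
    hence "x i < d" "y i < d" using x y qb_range by auto
    thus "(\<Sum>k<d. pauli1 d (a i) (x i) k * cnj (pauli1 d (a i) (y i) k)) = (if x i = y i then 1 else 0)"
      using p1_unit[OF d, of "x i" "y i" "fst (a i)" "snd (a i)"] by simp
  qed
  also have "\<dots> = qid x y" using x y by (rule prod_qid)
  finally show ?thesis .
qed

lemma pauli_zero:
  assumes x: "x \<in> qbasis d n" and y: "y \<in> qbasis d n"
  shows "pauli d n pzero x y = qid x y"
proof -
  have "pauli d n pzero x y = (\<Prod>i<n. if x i = y i then 1 else 0)"
    unfolding pauli_def pzero_def using x y qb_range by (intro prod.cong) (auto simp: p1_zero)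
  thus ?thesis using prod_qid[OF x y] by simp
qed

lemma pv_zero_iff: "a \<in> paulivecs d n \<Longrightarrow> (\<forall>i<n. a i = (0,0)) \<longleftrightarrow> a = pzero"
  using fs_eq_iff[of a "{..<d} \<times> {..<d}" "(0,0)" n pzero]
  by (auto simp: pv_fs pzero_def fs_def)

lemma pauli_trace:
  assumes d: "d \<ge> 1" and a: "a \<in> paulivecs d n"
  shows "qtr d n (pauli d n a) = (if a = pzero then of_nat d ^ n else 0)"
proof -
  have "qtr d n (pauli d n a) = (\<Sum>z\<in>qbasis d n. \<Prod>i<n. pauli1 d (a i) (z i) (z i))"
    unfolding qtr_def pauli_def by simp
  also have "\<dots> = (\<Prod>i<n. \<Sum>k<d. pauli1 d (a i) k k)"
    by (rule sum_qbasis_prod)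
  also have "\<dots> = (\<Prod>i<n. if a i = (0,0) then of_nat d else 0)"
  proof (rule prod.cong[OF refl])
    fix i assume "i \<in> {..<n}"
    hence "fst (a i) < d" "snd (a i) < d" using a pv_range by auto
    thus "(\<Sum>k<d. pauli1 d (a i) k k) = (if a i = (0,0) then of_nat d else 0)"
      using p1_trace[OF d, of "fst (a i)" "snd (a i)"] by (simp add: prod_eq_iff)
  qed
  also have "\<dots> = (if a = pzero then of_nat d ^ n else 0)"
    using pv_zero_iff[OF a] by (simp add: prod_indicator)
  finally show ?thesis .
qed

lemma pauli_kernel:
  assumes d: "d \<ge> 1" and r: "x \<in> qbasis d n" "y \<in> qbasis d n" "x' \<in> qbasis d n" "y' \<in> qbasis d n"
  shows "(\<Sum>b\<in>paulivecs d n. pauli d n b y x * cnj (pauli d n b y' x'))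
       = (if x = x' \<and> y = y' then of_nat d ^ n else 0)"
proof -
  have "(\<Sum>b\<in>paulivecs d n. pauli d n b y x * cnj (pauli d n b y' x'))
      = (\<Sum>b\<in>fs ({..<d} \<times> {..<d}) (0,0) n. \<Prod>i<n. (\<lambda>i a. pauli1 d a (y i) (x i) * cnj (pauli1 d a (y' i) (x' i))) i (b i))"
    unfolding pv_fs pauli_def by (simp add: prod.distrib)
  also have "\<dots> = (\<Prod>i<n. \<Sum>a\<in>{..<d} \<times> {..<d}. pauli1 d a (y i) (x i) * cnj (pauli1 d a (y' i) (x' i)))"
    by (rule sum_prod_fs) simp
  also have "\<dots> = (\<Prod>i<n. if x i = x' i \<and> y i = y' i then of_nat d else 0)"
  proof (rule prod.cong[OF refl])
    fix i assume "i \<in> {..<n}"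
    hence "x i < d" "y i < d" "x' i < d" "y' i < d" using r qb_range by auto
    thus "(\<Sum>a\<in>{..<d} \<times> {..<d}. pauli1 d a (y i) (x i) * cnj (pauli1 d a (y' i) (x' i)))
        = (if x i = x' i \<and> y i = y' i then of_nat d else 0)"
      using p1_parseval[OF d, of "y i" "x i" "y' i" "x' i"] by auto
  qed
  also have "\<dots> = (if x = x' \<and> y = y' then of_nat d ^ n else 0)"
    using fs_eq_iff[of x "{..<d}" 0 n x'] fs_eq_iff[of y "{..<d}" 0 n y'] r
    by (simp add: prod_indicator qbasis_fs) blast
  finally show ?thesis .
qed

section \<open>Pauli spectrum\<close>

definition ptr :: "nat \<Rightarrow> nat \<Rightarrow> qop \<Rightarrow> (nat \<Rightarrow> nat \<times> nat) \<Rightarrow> complex" where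
  "ptr d n Q b = qtr d n (qmul d n Q (pauli d n b))"

lemma pauli_prob_ptr: "pauli_prob d n Q b = (cmod (ptr d n Q b))\<^sup>2 / real d ^ (2 * n)"
  by (simp add: pauli_prob_def ptr_def)

lemma ptr_pairs: "ptr d n Q b = (\<Sum>p\<in>qbasis d n \<times> qbasis d n. Q (fst p) (snd p) * pauli d n b (snd p) (fst p))"
  unfolding ptr_def qtr_def qmul_def by (simp add: sum.cartesian_product split_def)

lemma ptr_cong:
  assumes "\<And>x y. x \<in> qbasis d n \<Longrightarrow> y \<in> qbasis d n \<Longrightarrow> Q x y = Q' x y"
  shows "ptr d n Q b = ptr d n Q' b"
  unfolding ptr_pairs by (rule sum.cong) (auto simp: assms)

lemma ptr_scal:
  assumes "\<And>x y. x \<in> qbasis d n \<Longrightarrow> y \<in> qbasis d n \<Longrightarrow> Q x y = c * Q' x y"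
  shows "ptr d n Q b = c * ptr d n Q' b"
  unfolding ptr_pairs sum_distrib_left by (rule sum.cong) (auto simp: assms)

lemma conj_unitary:
  assumes U: "qunitary d n U" and P: "isid d n (qmul d n P (qadj P))"
  shows "isid d n (qmul d n (qconj d n U P) (qadj (qconj d n U P)))"
proof -
  have u1: "isid d n (qmul d n (qadj U) U)" and u2: "isid d n (qmul d n U (qadj U))"
    using U by (auto simp: qunitary_iff)
  have "qmul d n (qconj d n U P) (qadj (qconj d n U P))
      = qmul d n U (qmul d n P (qmul d n (qadj U) (qmul d n U (qmul d n (qadj P) (qadj U)))))"
    by (simp add: qconj_def qadj_qmul qmul_assoc)
  also have "\<dots> = qmul d n U (qmul d n P (qmul d n (qadj P) (qadj U)))"
    by (simp add: cancel[OF u1])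
  also have "\<dots> = qmul d n U (qadj U)"
    by (simp add: cancel[OF P])
  finally show ?thesis using u2 by simp
qed

lemma pauli_isid: "d \<ge> 1 \<Longrightarrow> isid d n (qmul d n (pauli d n a) (qadj (pauli d n a)))"
  by (simp add: isid_def pauli_unit)

lemma parseval_c:
  assumes d: "d \<ge> 1" and Q: "isid d n (qmul d n Q (qadj Q))"
  shows "(\<Sum>b\<in>paulivecs d n. ptr d n Q b * cnj (ptr d n Q b)) = of_nat d ^ (2 * n)"
proof -
  let ?B = "qbasis d n \<times> qbasis d n"
  let ?P = "paulivecs d n"
  let ?F = "\<lambda>b p q. Q (fst p) (snd p) * cnj (Q (fst q) (snd q)) * (pauli d n b (snd p) (fst p) * cnj (pauli d n b (snd q) (fst q)))"
  have "(\<Sum>b\<in>?P. ptr d n Q b * cnj (ptr d n Q b)) = (\<Sum>b\<in>?P. \<Sum>p\<in>?B. \<Sum>q\<in>?B. ?F b p q)"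
    unfolding ptr_pairs cnj_sum sum_product by (simp add: algebra_simps)
  also have "\<dots> = (\<Sum>p\<in>?B. \<Sum>b\<in>?P. \<Sum>q\<in>?B. ?F b p q)" by (rule sum.swap)
  also have "\<dots> = (\<Sum>p\<in>?B. \<Sum>q\<in>?B. \<Sum>b\<in>?P. ?F b p q)" by (rule sum.cong[OF refl]) (rule sum.swap)
  also have "\<dots> = (\<Sum>p\<in>?B. \<Sum>q\<in>?B. Q (fst p) (snd p) * cnj (Q (fst q) (snd q)) * (if p = q then of_nat d ^ n else 0))"
  proof (intro sum.cong[OF refl])
    fix p q assume "p \<in> ?B" "q \<in> ?B"
    thus "(\<Sum>b\<in>?P. ?F b p q) = Q (fst p) (snd p) * cnj (Q (fst q) (snd q)) * (if p = q then of_nat d ^ n else 0)"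
      using pauli_kernel[OF d, where x="fst p" and y="snd p" and x'="fst q" and y'="snd q"]
      by (auto simp: sum_distrib_left[symmetric] prod_eq_iff)
  qed
  also have "\<dots> = (\<Sum>p\<in>?B. Q (fst p) (snd p) * cnj (Q (fst p) (snd p)) * of_nat d ^ n)"
    by (simp add: if_distrib cong: if_cong)
  also have "\<dots> = of_nat d ^ n * (\<Sum>x\<in>qbasis d n. qmul d n Q (qadj Q) x x)"
    unfolding qmul_def qadj_def sum_distrib_left
    by (simp add: sum.cartesian_product split_def algebra_simps)
  also have "\<dots> = of_nat d ^ n * of_nat (card (qbasis d n))"
    using Q by (simp add: isid_def qid_def)
  also have "\<dots> = of_nat d ^ (2 * n)" by (simp add: card_qbasis power_add[symmetric] mult_2)
  finally show ?thesis .
qed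

lemma parseval:
  assumes d: "d \<ge> 1" and Q: "isid d n (qmul d n Q (qadj Q))"
  shows "(\<Sum>b\<in>paulivecs d n. pauli_prob d n Q b) = 1"
proof -
  have "complex_of_real (\<Sum>b\<in>paulivecs d n. (cmod (ptr d n Q b))\<^sup>2)
      = (\<Sum>b\<in>paulivecs d n. complex_of_real ((cmod (ptr d n Q b))\<^sup>2))" by (rule of_real_sum)
  also have "\<dots> = (\<Sum>b\<in>paulivecs d n. ptr d n Q b * cnj (ptr d n Q b))"
    by (rule sum.cong[OF refl]) (rule complex_norm_square)
  also have "\<dots> = of_nat d ^ (2 * n)" by (rule parseval_c[OF d Q])
  finally have "complex_of_real (\<Sum>b\<in>paulivecs d n. (cmod (ptr d n Q b))\<^sup>2) = of_nat d ^ (2 * n)" .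
  moreover have "complex_of_real (real d ^ (2 * n)) = of_nat d ^ (2 * n)" by simp
  ultimately have "complex_of_real (\<Sum>b\<in>paulivecs d n. (cmod (ptr d n Q b))\<^sup>2) = complex_of_real (real d ^ (2 * n))"
    by (simp only:)
  hence "(\<Sum>b\<in>paulivecs d n. (cmod (ptr d n Q b))\<^sup>2) = real d ^ (2 * n)"
    by (simp only: of_real_eq_iff)
  thus ?thesis using d unfolding pauli_prob_ptr sum_divide_distrib[symmetric] by simp
qed

lemma expansion:
  assumes d: "d \<ge> 1" and x: "x \<in> qbasis d n" and y: "y \<in> qbasis d n"
  shows "(\<Sum>b\<in>paulivecs d n. ptr d n Q b * cnj (pauli d n b y x)) = of_nat d ^ n * Q x y"
proof -
  let ?B = "qbasis d n \<times> qbasis d n"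
  let ?P = "paulivecs d n"
  have "(\<Sum>b\<in>?P. ptr d n Q b * cnj (pauli d n b y x))
      = (\<Sum>b\<in>?P. \<Sum>p\<in>?B. Q (fst p) (snd p) * (pauli d n b (snd p) (fst p) * cnj (pauli d n b y x)))"
    unfolding ptr_pairs sum_distrib_right by (simp add: mult.assoc)
  also have "\<dots> = (\<Sum>p\<in>?B. \<Sum>b\<in>?P. Q (fst p) (snd p) * (pauli d n b (snd p) (fst p) * cnj (pauli d n b y x)))"
    by (rule sum.swap)
  also have "\<dots> = (\<Sum>p\<in>?B. Q (fst p) (snd p) * (if p = (x, y) then of_nat d ^ n else 0))"
  proof (rule sum.cong[OF refl])
    fix p assume "p \<in> ?B"
    thus "(\<Sum>b\<in>?P. Q (fst p) (snd p) * (pauli d n b (snd p) (fst p) * cnj (pauli d n b y x)))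
        = Q (fst p) (snd p) * (if p = (x, y) then of_nat d ^ n else 0)"
      using pauli_kernel[OF d, where x="fst p" and y="snd p" and x'=x and y'=y] x y
      by (auto simp: sum_distrib_left[symmetric] prod_eq_iff)
  qed
  also have "\<dots> = of_nat d ^ n * Q x y" using x y
    by (simp add: if_distrib cong: if_cong)
  finally show ?thesis .
qed

section \<open>Entropy\<close>

definition hfun :: "real \<Rightarrow> real" where "hfun p = (if p = 0 then 0 else p * ln p)"

lemma entropy_hfun: "pauli_entropy d n Q = - (\<Sum>a\<in>paulivecs d n. hfun (pauli_prob d n Q a))"
  by (simp add: pauli_entropy_def hfun_def Let_def)

lemma hfun_nonpos: "0 \<le> p \<Longrightarrow> p \<le> 1 \<Longrightarrow> hfun p \<le> 0"
  by (auto simp: hfun_def mult_nonneg_nonpos)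

lemma hfun_zero: assumes "0 \<le> p" "hfun p = 0" shows "p = 0 \<or> p = 1"
proof (cases "p = 0")
  case False
  hence "ln p = 0" using assms by (simp add: hfun_def)
  hence "p = 1" using False assms by simp
  thus ?thesis by simp
qed simp

lemma hfun_01: "p = 0 \<or> p = 1 \<Longrightarrow> hfun p = 0"
  by (auto simp: hfun_def)

lemma pauli_prob_nonneg: "0 \<le> pauli_prob d n Q b"
  by (simp add: pauli_prob_def)

lemma pauli_prob_le1:
  assumes d: "d \<ge> 1" and Q: "isid d n (qmul d n Q (qadj Q))" and b: "b \<in> paulivecs d n"
  shows "pauli_prob d n Q b \<le> 1"
proof -
  have "pauli_prob d n Q b \<le> (\<Sum>b\<in>paulivecs d n. pauli_prob d n Q b)"
    using b by (intro member_le_sum) (auto simp: pauli_prob_nonneg)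
  thus ?thesis using parseval[OF d Q] by simp
qed

lemma entropy_nonneg:
  assumes d: "d \<ge> 1" and Q: "isid d n (qmul d n Q (qadj Q))"
  shows "0 \<le> pauli_entropy d n Q"
proof -
  have "(\<Sum>a\<in>paulivecs d n. hfun (pauli_prob d n Q a)) \<le> 0"
    by (intro sum_nonpos hfun_nonpos pauli_prob_nonneg pauli_prob_le1[OF d Q])
  thus ?thesis by (simp add: entropy_hfun)
qed

lemma entropy_zero_01:
  assumes d: "d \<ge> 1" and Q: "isid d n (qmul d n Q (qadj Q))" and H: "pauli_entropy d n Q = 0"
    and b: "b \<in> paulivecs d n"
  shows "pauli_prob d n Q b = 0 \<or> pauli_prob d n Q b = 1"
proof -
  have "(\<Sum>a\<in>paulivecs d n. - hfun (pauli_prob d n Q a)) = 0"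
    using H by (simp add: entropy_hfun sum_negf)
  moreover have "\<forall>a\<in>paulivecs d n. 0 \<le> - hfun (pauli_prob d n Q a)"
    using hfun_nonpos pauli_prob_nonneg pauli_prob_le1[OF d Q] by force
  ultimately have "\<forall>a\<in>paulivecs d n. - hfun (pauli_prob d n Q a) = 0"
    using sum_nonneg_eq_0_iff[of "paulivecs d n" "\<lambda>a. - hfun (pauli_prob d n Q a)"] by simp
  thus ?thesis using b hfun_zero pauli_prob_nonneg by force
qed

lemma ptr_zero_iff: "pauli_prob d n Q b = 0 \<longleftrightarrow> d = 0 \<and> n > 0 \<or> ptr d n Q b = 0"
  by (auto simp: pauli_prob_ptr)

lemma entropy_zero_pauli:
  assumes d: "d \<ge> 1" and Q: "isid d n (qmul d n Q (qadj Q))" and H: "pauli_entropy d n Q = 0"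
  shows "\<exists>b\<in>paulivecs d n. \<exists>c. cmod c = 1 \<and>
           (\<forall>x\<in>qbasis d n. \<forall>y\<in>qbasis d n. Q x y = c * pauli d n b x y)"
proof -
  let ?p = "pauli_prob d n Q"
  let ?P = "paulivecs d n"
  have S: "(\<Sum>b\<in>?P. ?p b) = 1" by (rule parseval[OF d Q])
  obtain b0 where b0: "b0 \<in> ?P" "?p b0 = 1"
  proof (cases "\<exists>b\<in>?P. ?p b = 1")
    case True thus ?thesis using that by blast
  next
    case False
    hence "\<forall>b\<in>?P. ?p b = 0" using entropy_zero_01[OF d Q H] by blast
    hence "(\<Sum>b\<in>?P. ?p b) = 0" by simp
    thus ?thesis using S by simp
  qed
  have rest: "(\<Sum>b\<in>?P - {b0}. ?p b) = 0"
    using S sum.remove[OF finite_pv b0(1), of ?p] b0(2) by simp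
  have z: "ptr d n Q b = 0" if "b \<in> ?P" "b \<noteq> b0" for b
  proof -
    have "?p b = 0"
      using rest sum_nonneg_eq_0_iff[of "?P - {b0}" ?p] pauli_prob_nonneg that by auto
    thus ?thesis using d by (simp add: ptr_zero_iff)
  qed
  let ?t = "ptr d n Q b0"
  have ct: "cmod ?t = real d ^ n"
  proof -
    have "(cmod ?t)\<^sup>2 = (real d ^ n)\<^sup>2" using b0(2) d
      by (simp add: pauli_prob_ptr power_mult[symmetric] mult.commute)
    thus ?thesis by (simp add: power2_eq_iff_nonneg)
  qed
  let ?c = "?t * pha d n b0 / of_nat d ^ n"
  have cc: "cmod ?c = 1" using ct d by (simp add: norm_divide norm_mult norm_power)
  have "Q x y = ?c * pauli d n (pneg d b0) x y" if x: "x \<in> qbasis d n" and y: "y \<in> qbasis d n" for x y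
  proof -
    have "of_nat d ^ n * Q x y = (\<Sum>b\<in>?P. ptr d n Q b * cnj (pauli d n b y x))"
      using expansion[OF d x y] by simp
    also have "\<dots> = ?t * cnj (pauli d n b0 y x)"
      using z by (subst sum.remove[OF finite_pv b0(1)]) auto
    also have "cnj (pauli d n b0 y x) = pha d n b0 * pauli d n (pneg d b0) x y"
      using pauli_adj[OF d b0(1) x y] by (simp add: qadj_def)
    finally have "of_nat d ^ n * Q x y = ?t * (pha d n b0 * pauli d n (pneg d b0) x y)" .
    thus ?thesis using d by (simp add: field_simps)
  qed
  thus ?thesis using cc pneg_pv[OF d b0(1)] by blast
qed

lemma ptr_pauli_pauli:
  assumes d: "d \<ge> 1" and b: "b \<in> paulivecs d n" and e: "e \<in> paulivecs d n"
  shows "ptr d n (pauli d n b) e = phm d n b e * (if padd d b e = pzero then of_nat d ^ n else 0)"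
proof -
  have "ptr d n (pauli d n b) e = (\<Sum>x\<in>qbasis d n. phm d n b e * pauli d n (padd d b e) x x)"
    unfolding ptr_def qtr_def by (rule sum.cong[OF refl]) (simp add: pauli_mult[OF d])
  also have "\<dots> = phm d n b e * qtr d n (pauli d n (padd d b e))"
    by (simp add: qtr_def sum_distrib_left)
  finally show ?thesis using pauli_trace[OF d padd_pv[OF d b e]] by simp
qed

lemma pauli_entropy_zero:
  assumes d: "d \<ge> 1" and b: "b \<in> paulivecs d n" and c: "cmod c = 1"
    and Q: "\<And>x y. x \<in> qbasis d n \<Longrightarrow> y \<in> qbasis d n \<Longrightarrow> Q x y = c * pauli d n b x y"
  shows "pauli_entropy d n Q = 0"
proof -
  have "hfun (pauli_prob d n Q e) = 0" if e: "e \<in> paulivecs d n" for e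
  proof -
    have "ptr d n Q e = c * ptr d n (pauli d n b) e" by (rule ptr_scal) (rule Q)
    hence "cmod (ptr d n Q e) = (if padd d b e = pzero then real d ^ n else 0)"
      using c by (simp add: ptr_pauli_pauli[OF d b e] norm_mult norm_power)
    hence "pauli_prob d n Q e = 0 \<or> pauli_prob d n Q e = 1"
      using d by (auto simp: pauli_prob_ptr power_mult[symmetric] mult.commute)
    thus ?thesis by (rule hfun_01)
  qed
  thus ?thesis by (simp add: entropy_hfun)
qed

lemma qconj_cong:
  assumes "\<And>x y. x \<in> qbasis d n \<Longrightarrow> y \<in> qbasis d n \<Longrightarrow> M x y = M' x y"
  shows "qconj d n U M = qconj d n U M'"
  unfolding qconj_def by (rule qmul_sandwich) (rule assms)

lemma qconj_mult:
  assumes U: "qunitary d n U"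
  shows "qconj d n U (qmul d n M1 M2) = qmul d n (qconj d n U M1) (qconj d n U M2)"
proof -
  have u1: "isid d n (qmul d n (qadj U) U)" using U by (simp add: qunitary_iff)
  show ?thesis by (simp add: qconj_def qmul_assoc cancel[OF u1])
qed

lemma qmul_congB:
  assumes "\<And>x y. x \<in> qbasis d n \<Longrightarrow> y \<in> qbasis d n \<Longrightarrow> M1 x y = M1' x y"
    and "\<And>x y. x \<in> qbasis d n \<Longrightarrow> y \<in> qbasis d n \<Longrightarrow> M2 x y = M2' x y"
    and "x \<in> qbasis d n" "y \<in> qbasis d n"
  shows "qmul d n M1 M2 x y = qmul d n M1' M2' x y"
  unfolding qmul_def using assms by (intro sum.cong) auto

lemma qconj_qid:
  assumes U: "qunitary d n U" and M: "\<And>x y. x \<in> qbasis d n \<Longrightarrow> y \<in> qbasis d n \<Longrightarrow> M x y = qid x y"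
    and x: "x \<in> qbasis d n" and y: "y \<in> qbasis d n"
  shows "qconj d n U M x y = qid x y"
proof -
  have "qmul d n U (qmul d n M (qadj U)) = qmul d n U (qadj U)"
    by (rule qmul_rows) (rule qmul_idB_left[OF M])
  thus ?thesis using U x y by (simp add: qconj_def qunitary_iff isid_def)
qed

definition good :: "nat \<Rightarrow> nat \<Rightarrow> qop \<Rightarrow> qop \<Rightarrow> bool" where
  "good d n U M \<longleftrightarrow> (\<exists>b\<in>paulivecs d n. \<exists>c. cmod c = 1 \<and>
      (\<forall>x\<in>qbasis d n. \<forall>y\<in>qbasis d n. qconj d n U M x y = c * pauli d n b x y))"

lemma good_mult:
  assumes d: "d \<ge> 1" and U: "qunitary d n U" and g1: "good d n U M1" and g2: "good d n U M2"
  shows "good d n U (qmul d n M1 M2)"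
proof -
  obtain b1 c1 where b1: "b1 \<in> paulivecs d n" "cmod c1 = 1"
    "\<And>x y. x \<in> qbasis d n \<Longrightarrow> y \<in> qbasis d n \<Longrightarrow> qconj d n U M1 x y = c1 * pauli d n b1 x y"
    using g1 unfolding good_def by blast
  obtain b2 c2 where b2: "b2 \<in> paulivecs d n" "cmod c2 = 1"
    "\<And>x y. x \<in> qbasis d n \<Longrightarrow> y \<in> qbasis d n \<Longrightarrow> qconj d n U M2 x y = c2 * pauli d n b2 x y"
    using g2 unfolding good_def by blast
  have "qconj d n U (qmul d n M1 M2) x y = (c1 * c2 * phm d n b1 b2) * pauli d n (padd d b1 b2) x y"
    if x: "x \<in> qbasis d n" and y: "y \<in> qbasis d n" for x y
  proof -
    have "qconj d n U (qmul d n M1 M2) x y = qmul d n (qconj d n U M1) (qconj d n U M2) x y"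
      by (simp add: qconj_mult[OF U])
    also have "\<dots> = qmul d n (\<lambda>x y. c1 * pauli d n b1 x y) (\<lambda>x y. c2 * pauli d n b2 x y) x y"
      by (rule qmul_congB[OF b1(3) b2(3) x y])
    also have "\<dots> = c1 * c2 * qmul d n (pauli d n b1) (pauli d n b2) x y"
      by (simp add: qmul_scal_left qmul_scal_right)
    also have "\<dots> = (c1 * c2 * phm d n b1 b2) * pauli d n (padd d b1 b2) x y"
      by (simp add: pauli_mult[OF d x y])
    finally show ?thesis .
  qed
  moreover have "cmod (c1 * c2 * phm d n b1 b2) = 1" using b1 b2 by (simp add: norm_mult)
  ultimately show ?thesis unfolding good_def using padd_pv[OF d b1(1) b2(1)] by blast
qed

lemma good_cong:
  assumes "\<And>x y. x \<in> qbasis d n \<Longrightarrow> y \<in> qbasis d n \<Longrightarrow> M x y = M' x y"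
  shows "good d n U M \<longleftrightarrow> good d n U M'"
  unfolding good_def using qconj_cong[of d n M M' U, OF assms] by simp

lemma good_zero:
  assumes d: "d \<ge> 1" and U: "qunitary d n U"
  shows "good d n U (pauli d n pzero)"
proof -
  have "qconj d n U (pauli d n pzero) x y = 1 * pauli d n pzero x y"
    if "x \<in> qbasis d n" "y \<in> qbasis d n" for x y
    using qconj_qid[OF U pauli_zero that] pauli_zero[OF that] by simp
  thus ?thesis unfolding good_def by (intro bexI[OF _ pzero_pv[OF d]] exI[of _ 1]) auto
qed

definition trunc :: "nat \<Rightarrow> (nat \<Rightarrow> nat \<times> nat) \<Rightarrow> nat \<Rightarrow> nat \<times> nat" where
  "trunc m a = (\<lambda>i. if i < m then a i else (0,0))"
definition single :: "nat \<Rightarrow> (nat \<Rightarrow> nat \<times> nat) \<Rightarrow> nat \<Rightarrow> nat \<times> nat" where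
  "single m a = (\<lambda>i. if i = m then a m else (0,0))"

lemma trunc_step:
  assumes d: "d \<ge> 1" and a: "a \<in> paulivecs d n" and m: "m < n"
    and x: "x \<in> qbasis d n" and y: "y \<in> qbasis d n"
  shows "pauli d n (trunc (Suc m) a) x y = qmul d n (pauli d n (trunc m a)) (pauli d n (single m a)) x y"
proof -
  have e: "padd d (trunc m a) (single m a) = trunc (Suc m) a"
  proof
    fix i
    show "padd d (trunc m a) (single m a) i = trunc (Suc m) a i"
    proof (cases "i \<le> m")
      case True
      hence "fst (a i) < d" "snd (a i) < d" using pv_range[OF a] m by auto
      thus ?thesis using True by (auto simp: padd_def trunc_def single_def)
    next
      case False thus ?thesis by (simp add: padd_def trunc_def single_def)
    qed
  qed
  have p: "phm d n (trunc m a) (single m a) = 1"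
    unfolding phm_def by (rule prod.neutral) (auto simp: trunc_def single_def)
  show ?thesis using pauli_mult[OF d x y] e p by simp
qed

lemma extend_good:
  assumes d: "d \<ge> 1" and U: "qunitary d n U"
    and W: "\<And>a. a \<in> paulivecs d n \<Longrightarrow> pweight n a = 1 \<Longrightarrow> good d n U (pauli d n a)"
    and a: "a \<in> paulivecs d n"
  shows "good d n U (pauli d n a)"
proof -
  have "m \<le> n \<Longrightarrow> good d n U (pauli d n (trunc m a))" for m
  proof (induction m)
    case 0
    have "trunc 0 a = pzero" by (simp add: trunc_def pzero_def)
    thus ?case using good_zero[OF d U] by simp
  next
    case (Suc m)
    hence m: "m < n" by simp
    have g1: "good d n U (pauli d n (trunc m a))" using Suc by simp
    have g2: "good d n U (pauli d n (single m a))"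
    proof (cases "a m = (0,0)")
      case True
      hence "single m a = pzero" by (auto simp: single_def pzero_def)
      thus ?thesis using good_zero[OF d U] by simp
    next
      case False
      have "single m a \<in> paulivecs d n"
        using a m by (auto simp: paulivecs_def single_def)
      moreover have "{i. i < n \<and> single m a i \<noteq> (0,0)} = {m}"
        using False m by (auto simp: single_def)
      hence "pweight n (single m a) = 1" by (simp add: pweight_def)
      ultimately show ?thesis by (rule W)
    qed
    have "good d n U (qmul d n (pauli d n (trunc m a)) (pauli d n (single m a)))"
      by (rule good_mult[OF d U g1 g2])
    thus ?case using good_cong[of d n "pauli d n (trunc (Suc m) a)", OF trunc_step[OF d a m]] by simp
  qed
  moreover have "trunc n a = a"
    using a by (auto simp: trunc_def paulivecs_def)
  ultimately show ?thesis by (metis order_refl)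
qed

lemma clifford_good: "clifford d n U \<longleftrightarrow> qunitary d n U \<and> (\<forall>a\<in>paulivecs d n. good d n U (pauli d n a))"
  by (simp add: clifford_def good_def)

lemma part1:
  assumes d: "d \<ge> 2" and n: "n \<ge> 1" and U: "qunitary d n U"
  shows "0 \<le> magic d n U \<and> (magic d n U = 0 \<longleftrightarrow> clifford d n U)"
proof -
  have d1: "d \<ge> 1" using d by simp
  let ?W = "{a \<in> paulivecs d n. pweight n a = 1}"
  let ?F = "\<lambda>a. pauli_entropy d n (qconj d n U (pauli d n a))"
  define a0 where "a0 = (\<lambda>i::nat. if i = 0 then (1::nat, 0::nat) else (0,0))"
  have "a0 \<in> paulivecs d n" using d n by (auto simp: a0_def paulivecs_def)
  moreover have "{i. i < n \<and> a0 i \<noteq> (0,0)} = {0}" using n by (auto simp: a0_def)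
  hence "pweight n a0 = 1" by (simp add: pweight_def)
  ultimately have a0W: "a0 \<in> ?W" by simp
  have fin: "finite (?F ` ?W)" by simp
  have nn: "0 \<le> ?F a" if "a \<in> ?W" for a
    by (rule entropy_nonneg[OF d1 conj_unitary[OF U pauli_isid[OF d1]]])
  have mag: "magic d n U = Max (?F ` ?W)" by (simp add: magic_def)
  have ge: "?F a \<le> magic d n U" if "a \<in> ?W" for a
    unfolding mag using fin that by (intro Max_ge) auto
  have pos: "0 \<le> magic d n U" using ge[OF a0W] nn[OF a0W] by simp
  have "magic d n U = 0 \<longleftrightarrow> clifford d n U"
  proof
    assume m0: "magic d n U = 0"
    have "good d n U (pauli d n a)" if "a \<in> paulivecs d n" "pweight n a = 1" for a
    proof -
      have "?F a = 0" using ge[of a] nn[of a] that m0 by simp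
      thus ?thesis
        using entropy_zero_pauli[OF d1 conj_unitary[OF U pauli_isid[OF d1]]] unfolding good_def
        by blast
    qed
    hence "\<forall>a\<in>paulivecs d n. good d n U (pauli d n a)"
      using extend_good[OF d1 U] by blast
    thus "clifford d n U" using U by (simp add: clifford_good)
  next
    assume "clifford d n U"
    hence g: "\<forall>a\<in>paulivecs d n. good d n U (pauli d n a)" by (simp add: clifford_good)
    have "?F a = 0" if "a \<in> ?W" for a
    proof -
      have "good d n U (pauli d n a)" using g that by simp
      then obtain b c where "b \<in> paulivecs d n" "cmod c = 1"
        "\<forall>x\<in>qbasis d n. \<forall>y\<in>qbasis d n. qconj d n U (pauli d n a) x y = c * pauli d n b x y"
        unfolding good_def by blast
      thus ?thesis by (intro pauli_entropy_zero[OF d1]) auto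
    qed
    hence "?F ` ?W = {0}" using a0W by force
    thus "magic d n U = 0" unfolding mag by simp
  qed
  thus ?thesis using pos by simp
qed

lemma neg_cancel:
  fixes s s' d :: nat
  assumes "s < d" "s' < d"
  shows "(s + (d - s') mod d) mod d = 0 \<longleftrightarrow> s = s'"
proof (cases "s' = 0")
  case True thus ?thesis using assms by simp
next
  case False
  hence e: "(d - s') mod d = d - s'" using assms by simp
  have "(s + (d - s')) mod d = 0 \<longleftrightarrow> s + (d - s') = d"
  proof
    assume h: "(s + (d - s')) mod d = 0"
    have "s + (d - s') < 2 * d" "0 < s + (d - s')" using assms by auto
    moreover obtain q where "s + (d - s') = d * q" using h by (metis mod_0_imp_dvd dvd_def)
    ultimately have "q = 1" by (metis One_nat_def add_gr_0 bot_nat_0.not_eq_extremum less_2_cases mult.commute mult_0 mult_less_cancel2 nat_mult_1 zero_less_iff_neq_zero)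
    thus "s + (d - s') = d" using \<open>s + (d - s') = d * q\<close> by simp
  qed simp
  thus ?thesis using e assms by auto
qed

lemma padd_pneg:
  assumes d: "d \<ge> 1" and a: "a \<in> paulivecs d n" and a': "a' \<in> paulivecs d n"
  shows "padd d a (pneg d a') = pzero \<longleftrightarrow> a = a'"
proof
  assume h: "padd d a (pneg d a') = pzero"
  show "a = a'"
  proof
    fix i show "a i = a' i"
    proof (cases "i < n")
      case True
      have r: "fst (a i) < d" "snd (a i) < d" "fst (a' i) < d" "snd (a' i) < d"
        using pv_range[OF a True] pv_range[OF a' True] by auto
      have "(fst (a i) + (d - fst (a' i)) mod d) mod d = 0" "(snd (a i) + (d - snd (a' i)) mod d) mod d = 0"
        using fun_cong[OF h, of i] by (auto simp: padd_def pneg_def pzero_def)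
      hence "fst (a i) = fst (a' i)" "snd (a i) = snd (a' i)" using neg_cancel r by auto
      thus ?thesis by (simp add: prod_eq_iff)
    next
      case False thus ?thesis using a a' by (simp add: paulivecs_def)
    qed
  qed
next
  assume "a = a'"
  show "padd d a (pneg d a') = pzero"
  proof
    fix i
    show "padd d a (pneg d a') i = pzero i"
    proof (cases "i < n")
      case True
      have r: "fst (a' i) < d" "snd (a' i) < d" using pv_range[OF a' True] by auto
      thus ?thesis using neg_cancel[OF r(1) r(1)] neg_cancel[OF r(2) r(2)] \<open>a = a'\<close>
        by (simp add: padd_def pneg_def pzero_def)
    next
      case False thus ?thesis using a' \<open>a = a'\<close> by (simp add: paulivecs_def padd_def pneg_def pzero_def)
    qed
  qed
qed

lemma pauli_scalar_inj:
  assumes d: "d \<ge> 1" and a: "a \<in> paulivecs d n" and a': "a' \<in> paulivecs d n" and l: "lam \<noteq> 0"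
    and h: "\<And>x y. x \<in> qbasis d n \<Longrightarrow> y \<in> qbasis d n \<Longrightarrow> pauli d n a x y = lam * pauli d n a' x y"
  shows "a = a'"
proof -
  have na: "pneg d a' \<in> paulivecs d n" by (rule pneg_pv[OF d a'])
  have "ptr d n (pauli d n a) (pneg d a') = lam * ptr d n (pauli d n a') (pneg d a')"
    by (rule ptr_scal) (rule h)
  also have "ptr d n (pauli d n a') (pneg d a') = phm d n a' (pneg d a') * of_nat d ^ n"
    using ptr_pauli_pauli[OF d a' na] padd_pneg[OF d a' a'] by simp
  finally have "ptr d n (pauli d n a) (pneg d a') \<noteq> 0"
    using l d by (metis cmod_phm mult_eq_0_iff norm_zero of_nat_eq_0_iff power_not_zero zero_neq_one not_one_le_zero)
  hence "padd d a (pneg d a') = pzero" using ptr_pauli_pauli[OF d a na] by (auto split: if_splits)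
  thus ?thesis using padd_pneg[OF d a a'] by simp
qed

lemma qconj_comp: "qconj d n (qmul d n V U) P = qconj d n V (qconj d n U P)"
  by (simp add: qconj_def qadj_qmul qmul_assoc)

lemma qtr_cong_right:
  assumes "\<And>z w. z \<in> qbasis d n \<Longrightarrow> w \<in> qbasis d n \<Longrightarrow> M z w = M' z w"
  shows "qtr d n (qmul d n Q M) = qtr d n (qmul d n Q M')"
  unfolding qtr_def qmul_def using assms by (intro sum.cong refl) auto

lemma qmul_scal_left_fun: "qmul d n (\<lambda>x y. c * A x y) C = (\<lambda>x y. c * qmul d n A C x y)"
  by (intro ext) (rule qmul_scal_left)
lemma qmul_scal_right_fun: "qmul d n A (\<lambda>x y. c * C x y) = (\<lambda>x y. c * qmul d n A C x y)"
  by (intro ext) (rule qmul_scal_right)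

lemma clifford_entropy:
  assumes d: "d \<ge> 1" and V: "clifford d n V"
  shows "pauli_entropy d n (qconj d n V Q) = pauli_entropy d n Q"
proof -
  let ?P = "paulivecs d n"
  let ?B = "qbasis d n"
  have VU: "qunitary d n V" using V by (simp add: clifford_def)
  have v1: "isid d n (qmul d n (qadj V) V)" and v2: "isid d n (qmul d n V (qadj V))"
    using VU by (auto simp: qunitary_iff)
  have "\<forall>a\<in>?P. \<exists>b. b \<in> ?P \<and> (\<exists>c. cmod c = 1 \<and>
        (\<forall>x\<in>?B. \<forall>y\<in>?B. qconj d n V (pauli d n a) x y = c * pauli d n b x y))"
    using V unfolding clifford_def by (simp add: Bex_def)
  then obtain f where f: "\<forall>a\<in>?P. f a \<in> ?P \<and> (\<exists>c. cmod c = 1 \<and>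
        (\<forall>x\<in>?B. \<forall>y\<in>?B. qconj d n V (pauli d n a) x y = c * pauli d n (f a) x y))"
    by (metis (no_types, lifting) bchoice)
  then obtain g where fg: "\<forall>a\<in>?P. f a \<in> ?P \<and> cmod (g a) = 1 \<and>
        (\<forall>x\<in>?B. \<forall>y\<in>?B. qconj d n V (pauli d n a) x y = g a * pauli d n (f a) x y)"
    by (metis (no_types, lifting) bchoice)
  define R where "R b = qmul d n (qadj V) (qmul d n (pauli d n b) V)" for b
  have key: "pauli d n a x y = g a * R (f a) x y"
    if a: "a \<in> ?P" and x: "x \<in> ?B" and y: "y \<in> ?B" for a x y
  proof -
    have "pauli d n a x y = qmul d n (qadj V) (qmul d n (qconj d n V (pauli d n a)) V) x y"
    proof -
      have "qmul d n (qadj V) (qmul d n (qconj d n V (pauli d n a)) V)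
          = qmul d n (qadj V) (qmul d n V (qmul d n (pauli d n a) (qmul d n (qadj V) V)))"
        by (simp add: qconj_def qmul_assoc)
      hence "qmul d n (qadj V) (qmul d n (qconj d n V (pauli d n a)) V) x y
          = qmul d n (pauli d n a) (qmul d n (qadj V) V) x y"
        using cancel0[OF v1 x] by simp
      also have "\<dots> = pauli d n a x y" by (rule cancel_end[OF v1 y])
      finally show ?thesis by simp
    qed
    also have "\<dots> = qmul d n (qadj V) (qmul d n (\<lambda>x y. g a * pauli d n (f a) x y) V) x y"
      using fg a by (subst qmul_sandwich[where M' = "\<lambda>x y. g a * pauli d n (f a) x y"]) auto
    also have "\<dots> = g a * R (f a) x y"
      by (simp add: R_def qmul_scal_left_fun qmul_scal_right_fun)
    finally show ?thesis .
  qed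
  have inj: "inj_on f ?P"
  proof (rule inj_onI)
    fix a a' assume a: "a \<in> ?P" and a': "a' \<in> ?P" and e: "f a = f a'"
    have ga: "g a \<noteq> 0" "g a' \<noteq> 0" using fg a a' by auto
    show "a = a'"
    proof (rule pauli_scalar_inj[OF d a a'])
      show "g a / g a' \<noteq> 0" using ga by simp
      fix x y assume "x \<in> ?B" "y \<in> ?B"
      thus "pauli d n a x y = g a / g a' * pauli d n a' x y"
        using key[OF a] key[OF a'] e ga by simp
    qed
  qed
  have img: "f ` ?P = ?P" using endo_inj_surj[OF finite_pv _ inj] fg by auto
  have pp: "pauli_prob d n (qconj d n V Q) (f a) = pauli_prob d n Q a" if a: "a \<in> ?P" for a
  proof -
    have ga: "g a \<noteq> 0" "cmod (g a) = 1" using fg a by auto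
    have "ptr d n (qconj d n V Q) (f a) = qtr d n (qmul d n V (qmul d n Q (qmul d n (qadj V) (pauli d n (f a)))))"
      by (simp add: ptr_def qconj_def qmul_assoc)
    also have "\<dots> = qtr d n (qmul d n (qmul d n Q (qmul d n (qadj V) (pauli d n (f a)))) V)"
      by (rule qtr_comm)
    also have "\<dots> = qtr d n (qmul d n Q (R (f a)))"
      by (simp add: R_def qmul_assoc)
    also have "\<dots> = qtr d n (qmul d n Q (\<lambda>x y. (1 / g a) * pauli d n a x y))"
      using key[OF a] ga by (intro qtr_cong_right) simp
    also have "\<dots> = (1 / g a) * ptr d n Q a"
      unfolding qmul_scal_right_fun ptr_def qtr_def by (rule sum_distrib_left[symmetric])
    finally have "cmod (ptr d n (qconj d n V Q) (f a)) = cmod (ptr d n Q a)"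
      using ga by (simp add: norm_mult norm_divide)
    thus ?thesis by (simp add: pauli_prob_ptr)
  qed
  have "(\<Sum>b\<in>?P. hfun (pauli_prob d n (qconj d n V Q) b))
      = (\<Sum>b\<in>f ` ?P. hfun (pauli_prob d n (qconj d n V Q) b))" using img by simp
  also have "\<dots> = (\<Sum>a\<in>?P. hfun (pauli_prob d n (qconj d n V Q) (f a)))"
    by (rule sum.reindex[OF inj, unfolded comp_def])
  also have "\<dots> = (\<Sum>a\<in>?P. hfun (pauli_prob d n Q a))" using pp by simp
  finally show ?thesis by (simp add: entropy_hfun)
qed

lemma part2:
  assumes d: "d \<ge> 1" and V: "clifford d n V"
  shows "magic d n (qmul d n V U) = magic d n U"
  unfolding magic_def qconj_comp clifford_entropy[OF d V] ..

lemma prod_split: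
  fixes g :: "nat \<Rightarrow> 'a::comm_monoid_mult"
  shows "prod g {..<n1+n2} = prod g {..<n1} * prod (\<lambda>i. g (i + n1)) {..<n2}"
proof -
  have "prod g {0..<n1+n2} = prod g {0..<n1} * prod g {n1..<n1+n2}"
    by (simp add: prod.atLeastLessThan_concat)
  moreover have "prod g {n1..<n1+n2} = prod (\<lambda>i. g (i + n1)) {0..<n2}"
    using prod.shift_bounds_nat_ivl[of g 0 n1 n2] by (simp add: add.commute)
  ultimately show ?thesis by (simp add: lessThan_atLeast0)
qed

lemma qtensor_alt: "qtensor n1 A1 A2 x y = A1 (fL 0 n1 x) (fL 0 n1 y) * A2 (fR n1 x) (fR n1 y)"
  by (simp add: qtensor_def fL_def fR_def)

lemma qbasis_split:
  "(\<Sum>x\<in>qbasis d (n1 + n2). g x) = (\<Sum>x1\<in>qbasis d n1. \<Sum>x2\<in>qbasis d n2. g (fJ n1 x1 x2))"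
  unfolding qbasis_fs by (rule sum_split_fs)

lemma qbasis_fL: "x1 \<in> qbasis d n1 \<Longrightarrow> fL 0 n1 (fJ n1 x1 x2) = x1"
  unfolding qbasis_fs by (rule fL_fJ)

lemma tensor_mult:
  "qmul d (n1 + n2) (qtensor n1 A1 A2) (qtensor n1 B1 B2) = qtensor n1 (qmul d n1 A1 B1) (qmul d n2 A2 B2)"
proof (intro ext)
  fix x y
  have "qmul d (n1 + n2) (qtensor n1 A1 A2) (qtensor n1 B1 B2) x y
      = (\<Sum>z1\<in>qbasis d n1. \<Sum>z2\<in>qbasis d n2. (A1 (fL 0 n1 x) z1 * B1 z1 (fL 0 n1 y)) * (A2 (fR n1 x) z2 * B2 z2 (fR n1 y)))"
    unfolding qmul_def qtensor_alt qbasis_split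
    by (intro sum.cong refl) (simp add: qbasis_fL fR_fJ mult_ac)
  also have "\<dots> = qtensor n1 (qmul d n1 A1 B1) (qmul d n2 A2 B2) x y"
    unfolding qtensor_alt qmul_def by (rule sum_product[symmetric])
  finally show "qmul d (n1 + n2) (qtensor n1 A1 A2) (qtensor n1 B1 B2) x y = qtensor n1 (qmul d n1 A1 B1) (qmul d n2 A2 B2) x y" .
qed

lemma tensor_adj: "qadj (qtensor n1 A1 A2) = qtensor n1 (qadj A1) (qadj A2)"
  by (intro ext) (simp add: qadj_def qtensor_def)

lemma tensor_tr: "qtr d (n1 + n2) (qtensor n1 A1 A2) = qtr d n1 A1 * qtr d n2 A2"
proof -
  have "qtr d (n1 + n2) (qtensor n1 A1 A2) = (\<Sum>x1\<in>qbasis d n1. \<Sum>x2\<in>qbasis d n2. A1 x1 x1 * A2 x2 x2)"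
    unfolding qtr_def qtensor_alt qbasis_split
    by (intro sum.cong refl) (simp add: qbasis_fL fR_fJ)
  thus ?thesis unfolding qtr_def by (simp add: sum_product)
qed

lemma tensor_pauli:
  assumes a1: "a1 \<in> paulivecs d n1"
  shows "pauli d (n1 + n2) (fJ n1 a1 a2) = qtensor n1 (pauli d n1 a1) (pauli d n2 a2)"
proof (intro ext)
  fix x y
  show "pauli d (n1 + n2) (fJ n1 a1 a2) x y = qtensor n1 (pauli d n1 a1) (pauli d n2 a2) x y"
    unfolding pauli_def qtensor_alt prod_split
    by (simp add: fJ_def fL_def fR_def)
qed

lemma tensor_conj:
  "qconj d (n1 + n2) (qtensor n1 U1 U2) (qtensor n1 A1 A2) = qtensor n1 (qconj d n1 U1 A1) (qconj d n2 U2 A2)"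
  by (simp add: qconj_def tensor_adj tensor_mult)

lemma tensor_ptr:
  assumes b1: "b1 \<in> paulivecs d n1"
  shows "ptr d (n1 + n2) (qtensor n1 O1 O2) (fJ n1 b1 b2) = ptr d n1 O1 b1 * ptr d n2 O2 b2"
  by (simp add: ptr_def tensor_pauli[OF b1] tensor_mult tensor_tr)

lemma tensor_prob:
  assumes b1: "b1 \<in> paulivecs d n1"
  shows "pauli_prob d (n1 + n2) (qtensor n1 O1 O2) (fJ n1 b1 b2) = pauli_prob d n1 O1 b1 * pauli_prob d n2 O2 b2"
  by (simp add: pauli_prob_ptr tensor_ptr[OF b1] norm_mult power_mult_distrib power_add algebra_simps)

lemma qmul_qid_left: "x \<in> qbasis d n \<Longrightarrow> qmul d n qid A x y = A x y"
  by (rule qmul_idB_left) auto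

lemma prob_id:
  assumes d: "d \<ge> 1" and Q: "\<And>x y. x \<in> qbasis d n \<Longrightarrow> y \<in> qbasis d n \<Longrightarrow> Q x y = qid x y"
    and b: "b \<in> paulivecs d n"
  shows "pauli_prob d n Q b = (if b = pzero then 1 else 0)"
proof -
  have "ptr d n Q b = ptr d n qid b" by (rule ptr_cong) (rule Q)
  also have "\<dots> = qtr d n (pauli d n b)"
    unfolding ptr_def qtr_def by (intro sum.cong refl) (simp add: qmul_qid_left)
  finally show ?thesis using pauli_trace[OF d b] d
    by (simp add: pauli_prob_ptr norm_power power_mult[symmetric] mult.commute)
qed

lemma pv_split:
  "(\<Sum>a\<in>paulivecs d (n1 + n2). g a) = (\<Sum>a1\<in>paulivecs d n1. \<Sum>a2\<in>paulivecs d n2. g (fJ n1 a1 a2))"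
  unfolding pv_fs by (rule sum_split_fs)

lemma entropy_tensor_left:
  assumes d: "d \<ge> 1" and Q2: "\<And>x y. x \<in> qbasis d n2 \<Longrightarrow> y \<in> qbasis d n2 \<Longrightarrow> Q2 x y = qid x y"
  shows "pauli_entropy d (n1 + n2) (qtensor n1 Q1 Q2) = pauli_entropy d n1 Q1"
proof -
  have "(\<Sum>a\<in>paulivecs d (n1 + n2). hfun (pauli_prob d (n1 + n2) (qtensor n1 Q1 Q2) a))
      = (\<Sum>a1\<in>paulivecs d n1. \<Sum>a2\<in>paulivecs d n2. if a2 = pzero then hfun (pauli_prob d n1 Q1 a1) else 0)"
    unfolding pv_split
    by (intro sum.cong refl) (simp add: tensor_prob prob_id[OF d Q2] hfun_def)
  also have "\<dots> = (\<Sum>a1\<in>paulivecs d n1. hfun (pauli_prob d n1 Q1 a1))"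
    using pzero_pv[OF d] by simp
  finally show ?thesis by (simp add: entropy_hfun)
qed

lemma entropy_tensor_right:
  assumes d: "d \<ge> 1" and Q1: "\<And>x y. x \<in> qbasis d n1 \<Longrightarrow> y \<in> qbasis d n1 \<Longrightarrow> Q1 x y = qid x y"
  shows "pauli_entropy d (n1 + n2) (qtensor n1 Q1 Q2) = pauli_entropy d n2 Q2"
proof -
  have "(\<Sum>a\<in>paulivecs d (n1 + n2). hfun (pauli_prob d (n1 + n2) (qtensor n1 Q1 Q2) a))
      = (\<Sum>a1\<in>paulivecs d n1. \<Sum>a2\<in>paulivecs d n2. if a1 = pzero then hfun (pauli_prob d n2 Q2 a2) else 0)"
    unfolding pv_split
    by (intro sum.cong refl) (simp add: tensor_prob prob_id[OF d Q1] hfun_def)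
  also have "\<dots> = (\<Sum>a1\<in>paulivecs d n1. if a1 = pzero then (\<Sum>a2\<in>paulivecs d n2. hfun (pauli_prob d n2 Q2 a2)) else 0)"
    by (intro sum.cong refl) simp
  also have "\<dots> = (\<Sum>a2\<in>paulivecs d n2. hfun (pauli_prob d n2 Q2 a2))"
    using pzero_pv[OF d] by simp
  finally show ?thesis by (simp add: entropy_hfun)
qed

lemma weight_split:
  assumes d: "d \<ge> 1"
  shows "{a \<in> paulivecs d (n1 + n2). pweight (n1 + n2) a = 1}
       = (\<lambda>a1. fJ n1 a1 pzero) ` {a1 \<in> paulivecs d n1. pweight n1 a1 = 1}
         \<union> (\<lambda>a2. fJ n1 pzero a2) ` {a2 \<in> paulivecs d n2. pweight n2 a2 = 1}"
  (is "?W = ?L \<union> ?R")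
proof
  show "?W \<subseteq> ?L \<union> ?R"
  proof
    fix a assume "a \<in> ?W"
    hence a: "a \<in> paulivecs d (n1 + n2)" and w: "card {i. i < n1 + n2 \<and> a i \<noteq> (0,0)} = 1"
      by (auto simp: pweight_def)
    obtain i0 where S: "{i. i < n1 + n2 \<and> a i \<noteq> (0,0)} = {i0}" using w by (rule card_1_singletonE)
    have zero: "a i = (0,0)" if "i \<noteq> i0" for i
    proof (cases "i < n1 + n2")
      case True thus ?thesis using S that by blast
    next
      case False thus ?thesis using a by (simp add: paulivecs_def)
    qed
    have i0: "i0 < n1 + n2" "a i0 \<noteq> (0,0)" using S by auto
    let ?a1 = "fL (0,0) n1 a" and ?a2 = "fR n1 a"
    have a1: "?a1 \<in> paulivecs d n1" using a unfolding pv_fs by (rule fL_fs)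
    have a2: "?a2 \<in> paulivecs d n2" using a unfolding pv_fs by (rule fR_fs)
    have aJ: "a = fJ n1 ?a1 ?a2" using a unfolding pv_fs by (rule fJ_fLR[symmetric])
    show "a \<in> ?L \<union> ?R"
    proof (cases "i0 < n1")
      case True
      have "?a2 = pzero" using True by (auto simp: fR_def pzero_def intro!: zero)
      moreover have "{i. i < n1 \<and> ?a1 i \<noteq> (0,0)} = {i0}" using True i0 zero by (auto simp: fL_def)
      hence "pweight n1 ?a1 = 1" by (simp add: pweight_def)
      ultimately show ?thesis using aJ a1 by auto
    next
      case False
      have "?a1 = pzero" using False by (auto simp: fL_def pzero_def intro!: zero)
      moreover have "{j. j < n2 \<and> ?a2 j \<noteq> (0,0)} = {i0 - n1}" using False i0 zero
        by (auto simp: fR_def) (metis add_diff_cancel_right')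
      hence "pweight n2 ?a2 = 1" by (simp add: pweight_def)
      ultimately show ?thesis using aJ a2 by auto
    qed
  qed
next
  show "?L \<union> ?R \<subseteq> ?W"
  proof
    fix a assume "a \<in> ?L \<union> ?R"
    thus "a \<in> ?W"
    proof
      assume "a \<in> ?L"
      then obtain a1 where a1: "a1 \<in> paulivecs d n1" "pweight n1 a1 = 1" and e: "a = fJ n1 a1 pzero" by auto
      have "a \<in> paulivecs d (n1 + n2)" using e fJ_fs[of a1 _ _ n1 pzero n2] a1 pzero_pv[OF d]
        by (simp add: pv_fs)
      moreover have "{i. i < n1 + n2 \<and> a i \<noteq> (0,0)} = {i. i < n1 \<and> a1 i \<noteq> (0,0)}"
        using e by (auto simp: fJ_def pzero_def)
      ultimately show ?thesis using a1 by (simp add: pweight_def)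
    next
      assume "a \<in> ?R"
      then obtain a2 where a2: "a2 \<in> paulivecs d n2" "pweight n2 a2 = 1" and e: "a = fJ n1 pzero a2" by auto
      have "a \<in> paulivecs d (n1 + n2)" using e fJ_fs[of pzero _ _ n1 a2 n2] a2 pzero_pv[OF d]
        by (simp add: pv_fs)
      moreover have "{i. i < n1 + n2 \<and> a i \<noteq> (0,0)} = (\<lambda>j. j + n1) ` {j. j < n2 \<and> a2 j \<noteq> (0,0)}"
        using e by (auto simp: fJ_def pzero_def image_iff) (metis add.commute less_diff_conv2 not_less le_add_diff_inverse2)
      moreover have "card ((\<lambda>j. j + n1) ` {j. j < n2 \<and> a2 j \<noteq> (0,0)}) = card {j. j < n2 \<and> a2 j \<noteq> (0,0)}"
        by (rule card_image) (simp add: inj_on_def)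
      ultimately show ?thesis using a2 by (simp add: pweight_def)
    qed
  qed
qed

lemma W_nonempty:
  assumes d: "d \<ge> 2" and n: "n \<ge> 1"
  shows "{a \<in> paulivecs d n. pweight n a = 1} \<noteq> {}"
proof -
  define a0 where "a0 = (\<lambda>i::nat. if i = 0 then (1::nat, 0::nat) else (0,0))"
  have "a0 \<in> paulivecs d n" using d n by (auto simp: a0_def paulivecs_def)
  moreover have "{i. i < n \<and> a0 i \<noteq> (0,0)} = {0}" using n by (auto simp: a0_def)
  hence "pweight n a0 = 1" by (simp add: pweight_def)
  ultimately show ?thesis by blast
qed

lemma part3:
  assumes d: "d \<ge> 2" and n1: "n1 \<ge> 1" and n2: "n2 \<ge> 1"
    and U1: "qunitary d n1 U1" and U2: "qunitary d n2 U2"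
  shows "magic d (n1 + n2) (qtensor n1 U1 U2) = max (magic d n1 U1) (magic d n2 U2)"
proof -
  have d1: "d \<ge> 1" using d by simp
  let ?T = "qtensor n1 U1 U2"
  let ?F = "\<lambda>a. pauli_entropy d (n1 + n2) (qconj d (n1 + n2) ?T (pauli d (n1 + n2) a))"
  let ?F1 = "\<lambda>a. pauli_entropy d n1 (qconj d n1 U1 (pauli d n1 a))"
  let ?F2 = "\<lambda>a. pauli_entropy d n2 (qconj d n2 U2 (pauli d n2 a))"
  let ?W1 = "{a1 \<in> paulivecs d n1. pweight n1 a1 = 1}"
  let ?W2 = "{a2 \<in> paulivecs d n2. pweight n2 a2 = 1}"
  have id2: "qconj d n2 U2 (pauli d n2 pzero) x y = qid x y" if "x \<in> qbasis d n2" "y \<in> qbasis d n2" for x y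
    by (rule qconj_qid[OF U2 pauli_zero that]) (simp_all add: that)
  have id1: "qconj d n1 U1 (pauli d n1 pzero) x y = qid x y" if "x \<in> qbasis d n1" "y \<in> qbasis d n1" for x y
    by (rule qconj_qid[OF U1 pauli_zero that]) (simp_all add: that)
  have L: "?F (fJ n1 a1 pzero) = ?F1 a1" if "a1 \<in> paulivecs d n1" for a1
    unfolding tensor_pauli[OF that] tensor_conj by (rule entropy_tensor_left[OF d1 id2])
  have R: "?F (fJ n1 pzero a2) = ?F2 a2" for a2
    unfolding tensor_pauli[OF pzero_pv[OF d1]] tensor_conj by (rule entropy_tensor_right[OF d1 id1])
  have "?F ` {a \<in> paulivecs d (n1 + n2). pweight (n1 + n2) a = 1} = ?F1 ` ?W1 \<union> ?F2 ` ?W2"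
    unfolding weight_split[OF d1] image_Un image_image using L R by (auto simp: image_iff)
  hence "magic d (n1 + n2) ?T = Max (?F1 ` ?W1 \<union> ?F2 ` ?W2)" by (simp add: magic_def)
  also have "\<dots> = max (Max (?F1 ` ?W1)) (Max (?F2 ` ?W2))"
    using W_nonempty[OF d n1] W_nonempty[OF d n2] by (intro Max_Un) auto
  finally show ?thesis by (simp add: magic_def)
qed

theorem mainTheorem13:
  fixes d :: nat
  assumes "d \<ge> 2"
  shows "(\<forall>n\<ge>1. \<forall>U. qunitary d n U \<longrightarrow>
            magic d n U \<ge> 0 \<and> (magic d n U = 0 \<longleftrightarrow> clifford d n U))
       \<and> (\<forall>n\<ge>1. \<forall>U V. qunitary d n U \<longrightarrow> clifford d n V \<longrightarrow>
            magic d n (qmul d n V U) = magic d n U)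
       \<and> (\<forall>n1\<ge>1. \<forall>n2\<ge>1. \<forall>U1 U2. qunitary d n1 U1 \<longrightarrow> qunitary d n2 U2 \<longrightarrow>
            magic d (n1 + n2) (qtensor n1 U1 U2) = max (magic d n1 U1) (magic d n2 U2))"
proof -
  have d1: "d \<ge> 1" using assms by simp
  show ?thesis using part1[OF assms] part2[OF d1] part3[OF assms] by blast
qed

end
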